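(* Let $E_1$ and $E_2$ be reflexive para-Hilbert spaces and let $A=(A_X,A_H,A_Y)\in \operatorname{Mor}(E_1;E_2)$ be a surjective morphism. Define $E_0\coloneqq (\ker(A_X),\ker(A_H),\ker(A_Y))$, i.e. $X_{E_0}=\ker(A_X)\subset X_{E_1}$, $H_{E_0}=\ker(A_H)\subset H_{E_1}$, $Y_{E_0}=\ker(A_Y)\subset Y_{E_1}$, and denote the canonical injections by $i_{E_0}\colon X_{E_0}\hookrightarrow H_{E_0}$ and $j_{E_0}\colon H_{E_0}\hookrightarrow Y_{E_0}$. Moreover, define \begin{align*} I_{E_0}\colon H_{E_0}\to H_{E_0}', &\quad \langle I_{E_0}\, v_1, v_2\rangle \coloneqq \langle I_{E_1}\, v_1, v_2\rangle \quad \text{for } v_1, v_2 \in H_{E_0},\\ J_{E_0}\colon X_{E_0}\to Y_{E_0}', &\quad \langle J_{E_0}\, u, w\rangle \coloneqq \langle J_{E_1}\, u, w\rangle \quad \text{for } u \in X_{E_0},\ w \in Y_{E_0}. \end{align*} Then the following statements are equivalent: \begin{enumerate} \item $A$ admits a pseudoinverse. \item The mapping $\begin{pmatrix} J_{E_1} & A_Y' \\ A_X & 0 \end{pmatrix}\colon X_{E_1}\oplus Y_{E_2}' \to Y_{E_1}'\oplus X_{E_2}$ is continuously invertible. \item The mapping $\begin{pmatrix} K_{E_1} & A_X' \\ A_Y & 0 \end{pmatrix}\colon Y_{E_1}\oplus X_{E_2}' \to X_{E_1}'\oplus Y_{E_2}$ is continuously invertible. \end{enumerate} In any of these cases, $(E_0,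 I_{E_0}, J_{E_0})$ is a para-Hilbert space.
   Context: A para-Hilbert space $E$ consists of two Banach spaces $X_E$, $Y_E$ and a Hilbert space $H_E$; continuous, linear, dense injections $i_E\colon X_E\hookrightarrow H_E$ and $j_E\colon H_E\hookrightarrow Y_E$; an inner product on $H_E$ with Riesz isomorphism $I_E\colon H_E\to H_E'$; and a Banach space isomorphism $J_E\colon X_E\to Y_E'$ such that $I_E\, i_E = j_E'\, J_E$. A morphism $A\in\operatorname{Mor}(E_1;E_2)$ is a triple $(A_X,A_H,A_Y)$ of continuous linear maps $A_X\colon X_{E_1}\to X_{E_2}$, $A_H\colon H_{E_1}\to H_{E_2}$, $A_Y\colon Y_{E_1}\to Y_{E_2}$ with $i_{E_2}A_X = A_H i_{E_1}$ and $j_{E_2}A_H=A_Y j_{E_1}$; products are taken componentwise. $E$ is reflexive if $Y_E$ (hence $X_E$) is reflexive. For reflexive $E$, with $\Psi_{Y_E}\colon Y_E\to Y_E''$ the canonical embedding, $K_E\coloneqq J_E'\,\Psi_{Y_E}\colon Y_E\to X_E'$ is the unique Banach isomorphism with $K_E\, j_E = i_E'\, I_E$. For reflexive $E_1,E_2$ the adjoint morphism is $A^*=(A_X^*,A_H^*,A_Y^* )$ with $A_X^*=J_{E_1}^{-1}A_Y'J_{E_2}$, $A_H^*$ the Hilbert adjoint, and $A_Y^*=K_{E_1}^{-1}A_X'K_{E_2}$. A morphism $B\in\operatorname{Mor}(E_2;E_1)$ is a generalized inverse of $A$ if $ABA=A$ and $BAB=B$; it is the pseudoinverse if moreover $A_HB_H$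 and $B_HA_H$ are self-adjoint (orthoprojectors), equivalently $(AB)^*=AB$ and $(BA)^*=BA$. Surjectivity of $A$ means each component is surjective. *)

theory Defs
  imports "HOL-Analysis.Analysis"
begin

definition bounded_linear_on :: "'a::real_normed_vector set \<Rightarrow> ('a \<Rightarrow> 'b::real_normed_vector) \<Rightarrow> bool" where
  "bounded_linear_on S f \<longleftrightarrow>
     (\<forall>x\<in>S. \<forall>y\<in>S. f (x + y) = f x + f y) \<and>
     (\<forall>c. \<forall>x\<in>S. f (c *\<^sub>R x) = c *\<^sub>R f x) \<and>
     (\<exists>C. \<forall>x\<in>S. norm (f x) \<le> C * norm x)"

text \<open>The inner product on H is the one of the ambient type (restricted), so the Riesz map
  I is v \<mapsto> inner v (restricted to H).  The isomorphism J : X \<rightarrow> Y' is given through its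
  pairing J u w = \<langle>J u, w\<rangle>; the dual Y' of the subspace Y consists of the bounded linear
  functionals on Y (identified when they agree on Y).\<close>

definition para_hilbert_on ::
  "'x::banach set \<Rightarrow> 'h::{real_inner,complete_space} set \<Rightarrow> 'y::banach set \<Rightarrow>
   ('x \<Rightarrow> 'h) \<Rightarrow> ('h \<Rightarrow> 'y) \<Rightarrow> ('x \<Rightarrow> 'y \<Rightarrow> real) \<Rightarrow> bool" where
  "para_hilbert_on X H Y i j J \<longleftrightarrow>
     subspace X \<and> closed X \<and> subspace H \<and> closed H \<and> subspace Y \<and> closed Y \<and>
     \<comment> \<open>i : X \<hookrightarrow> H continuous, linear, dense injection\<close>
     i ` X \<subseteq> H \<and> bounded_linear_on X i \<and> inj_on i X \<and> H \<subseteq> closure (i ` X) \<and>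
     \<comment> \<open>j : H \<hookrightarrow> Y continuous, linear, dense injection\<close>
     j ` H \<subseteq> Y \<and> bounded_linear_on H j \<and> inj_on j H \<and> Y \<subseteq> closure (j ` H) \<and>
     \<comment> \<open>J : X \<rightarrow> Y' is a bounded linear map\<close>
     (\<forall>u\<in>X. bounded_linear_on Y (J u)) \<and>
     (\<forall>w\<in>Y. \<forall>u\<in>X. \<forall>u'\<in>X. J (u + u') w = J u w + J u' w) \<and>
     (\<forall>w\<in>Y. \<forall>c. \<forall>u\<in>X. J (c *\<^sub>R u) w = c * J u w) \<and>
     (\<exists>C. \<forall>u\<in>X. \<forall>w\<in>Y. \<bar>J u w\<bar> \<le> C * norm u * norm w) \<and>
     \<comment> \<open>J is injective\<close>
     (\<forall>u\<in>X. (\<forall>w\<in>Y. J u w = 0) \<longrightarrow> u = 0) \<and>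
     \<comment> \<open>J is surjective onto Y'\<close>
     (\<forall>\<phi>. bounded_linear_on Y \<phi> \<longrightarrow> (\<exists>u\<in>X. \<forall>w\<in>Y. J u w = \<phi> w)) \<and>
     \<comment> \<open>J has a bounded inverse: norm u \<le> C * (dual norm of J u)\<close>
     (\<exists>C. \<forall>u\<in>X. \<forall>M\<ge>0. (\<forall>w\<in>Y. \<bar>J u w\<bar> \<le> M * norm w) \<longrightarrow> norm u \<le> C * M) \<and>
     \<comment> \<open>compatibility I i = j' J\<close>
     (\<forall>u\<in>X. \<forall>v\<in>H. inner (i u) v = J u (j v))"

definition para_hilbert ::
  "('x::banach \<Rightarrow>\<^sub>L 'h::{real_inner,complete_space}) \<Rightarrow> ('h \<Rightarrow>\<^sub>L 'y::banach) \<Rightarrow>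
   ('x \<Rightarrow>\<^sub>L ('y \<Rightarrow>\<^sub>L real)) \<Rightarrow> bool" where
  "para_hilbert i j J \<longleftrightarrow>
     para_hilbert_on UNIV UNIV UNIV (blinfun_apply i) (blinfun_apply j) (\<lambda>u w. blinfun_apply (blinfun_apply J u) w)"

definition reflexive_space :: "'y::banach itself \<Rightarrow> bool" where
  "reflexive_space _ \<longleftrightarrow>
     (\<forall>\<Phi> :: ('y \<Rightarrow>\<^sub>L real) \<Rightarrow>\<^sub>L real. \<exists>y::'y. \<forall>\<phi>. blinfun_apply \<Phi> \<phi> = blinfun_apply \<phi> y)"

text \<open>K_E = J_E' \<Psi>_Y : Y \<rightarrow> X', i.e. (K_E w) u = \<langle>J_E u, w\<rangle>.\<close>
definition K_map :: "('x::banach \<Rightarrow>\<^sub>L ('y::banach \<Rightarrow>\<^sub>L real)) \<Rightarrow> 'y \<Rightarrow> ('x \<Rightarrow>\<^sub>L real)" where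
  "K_map J w = Blinfun (\<lambda>u. blinfun_apply (blinfun_apply J u) w)"

definition morphism ::
  "('x1::banach \<Rightarrow>\<^sub>L 'h1::{real_inner,complete_space}) \<Rightarrow> ('h1 \<Rightarrow>\<^sub>L 'y1::banach) \<Rightarrow>
   ('x2::banach \<Rightarrow>\<^sub>L 'h2::{real_inner,complete_space}) \<Rightarrow> ('h2 \<Rightarrow>\<^sub>L 'y2::banach) \<Rightarrow>
   ('x1 \<Rightarrow>\<^sub>L 'x2) \<Rightarrow> ('h1 \<Rightarrow>\<^sub>L 'h2) \<Rightarrow> ('y1 \<Rightarrow>\<^sub>L 'y2) \<Rightarrow> bool" where
  "morphism i1 j1 i2 j2 AX AH AY \<longleftrightarrow>
     i2 o\<^sub>L AX = AH o\<^sub>L i1 \<and> j2 o\<^sub>L AH = AY o\<^sub>L j1"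

definition self_adjoint_op :: "('h::real_inner \<Rightarrow>\<^sub>L 'h) \<Rightarrow> bool" where
  "self_adjoint_op P \<longleftrightarrow> (\<forall>x y. inner (blinfun_apply P x) y = inner x (blinfun_apply P y))"

definition is_pseudoinverse ::
  "('x1::banach \<Rightarrow>\<^sub>L 'h1::{real_inner,complete_space}) \<Rightarrow> ('h1 \<Rightarrow>\<^sub>L 'y1::banach) \<Rightarrow>
   ('x2::banach \<Rightarrow>\<^sub>L 'h2::{real_inner,complete_space}) \<Rightarrow> ('h2 \<Rightarrow>\<^sub>L 'y2::banach) \<Rightarrow>
   ('x1 \<Rightarrow>\<^sub>L 'x2) \<Rightarrow> ('h1 \<Rightarrow>\<^sub>L 'h2) \<Rightarrow> ('y1 \<Rightarrow>\<^sub>L 'y2) \<Rightarrow>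
   ('x2 \<Rightarrow>\<^sub>L 'x1) \<Rightarrow> ('h2 \<Rightarrow>\<^sub>L 'h1) \<Rightarrow> ('y2 \<Rightarrow>\<^sub>L 'y1) \<Rightarrow> bool" where
  "is_pseudoinverse i1 j1 i2 j2 AX AH AY BX BH BY \<longleftrightarrow>
     morphism i2 j2 i1 j1 BX BH BY \<and>
     AX o\<^sub>L BX o\<^sub>L AX = AX \<and> AH o\<^sub>L BH o\<^sub>L AH = AH \<and> AY o\<^sub>L BY o\<^sub>L AY = AY \<and>
     BX o\<^sub>L AX o\<^sub>L BX = BX \<and> BH o\<^sub>L AH o\<^sub>L BH = BH \<and> BY o\<^sub>L AY o\<^sub>L BY = BY \<and>
     self_adjoint_op (AH o\<^sub>L BH) \<and> self_adjoint_op (BH o\<^sub>L AH)"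

definition cont_invertible :: "('a::real_normed_vector \<Rightarrow> 'b::real_normed_vector) \<Rightarrow> bool" where
  "cont_invertible f \<longleftrightarrow> bounded_linear f \<and>
     (\<exists>g. bounded_linear g \<and> (\<forall>x. g (f x) = x) \<and> (\<forall>y. f (g y) = y))"

end

theory Submission
  imports Defs
begin

definition hb_good :: "'a::real_normed_vector \<Rightarrow> ('a \<times> real) set \<Rightarrow> bool" where
  "hb_good x0 G \<longleftrightarrow> (x0, norm x0) \<in> G \<and>
     (\<forall>p\<in>G. \<forall>q\<in>G. \<forall>c d. (c *\<^sub>R fst p + d *\<^sub>R fst q, c * snd p + d * snd q) \<in> G) \<and>
     (\<forall>p\<in>G. snd p \<le> norm (fst p))"

lemma hb_func:
  assumes "hb_good x0 G" "(x,a) \<in> G" "(x,b) \<in> G"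
  shows "a = b"
proof -
  from assms have "(1 *\<^sub>R x + (-1) *\<^sub>R x, 1 * a + (-1) * b) \<in> G"
    unfolding hb_good_def by (metis fst_conv snd_conv)
  hence 1: "(0, a - b) \<in> G" by simp
  from assms have "(1 *\<^sub>R x + (-1) *\<^sub>R x, 1 * b + (-1) * a) \<in> G"
    unfolding hb_good_def by (metis fst_conv snd_conv)
  hence 2: "(0, b - a) \<in> G" by simp
  from 1 2 assms(1) have "a - b \<le> 0" "b - a \<le> 0" unfolding hb_good_def by force+
  thus ?thesis by simp
qed

lemma hb_init: "hb_good x0 {(t *\<^sub>R x0, t * norm x0) | t. True}"
  unfolding hb_good_def
proof (intro conjI ballI allI)
  show "(x0, norm x0) \<in> {(t *\<^sub>R x0, t * norm x0) |t. True}"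
    by (rule CollectI, rule exI[of _ 1], simp)
next
  fix p q and c d :: real
  assume "p \<in> {(t *\<^sub>R x0, t * norm x0) |t. True}" "q \<in> {(t *\<^sub>R x0, t * norm x0) |t. True}"
  then obtain s t where "p = (s *\<^sub>R x0, s * norm x0)" "q = (t *\<^sub>R x0, t * norm x0)" by blast
  thus "(c *\<^sub>R fst p + d *\<^sub>R fst q, c * snd p + d * snd q) \<in> {(t *\<^sub>R x0, t * norm x0) |t. True}"
    by (intro CollectI exI[of _ "c * s + d * t"]) (simp add: algebra_simps scaleR_add_left)
next
  fix p assume "p \<in> {(t *\<^sub>R x0, t * norm x0) |t. True}"
  then obtain s where "p = (s *\<^sub>R x0, s * norm x0)" by blast
  thus "snd p \<le> norm (fst p)" by (simp add: abs_ge_self mult_right_mono)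
qed

lemma hb_extend:
  fixes M :: "('a::real_normed_vector \<times> real) set"
  assumes good: "hb_good x0 M" and y: "\<forall>a. (y, a) \<notin> M"
  shows "\<exists>M'. hb_good x0 M' \<and> M \<subseteq> M' \<and> M' \<noteq> M"
proof -
  have lin: "\<And>p q c d. p \<in> M \<Longrightarrow> q \<in> M \<Longrightarrow> (c *\<^sub>R fst p + d *\<^sub>R fst q, c * snd p + d * snd q) \<in> M"
    and bnd: "\<And>p. p \<in> M \<Longrightarrow> snd p \<le> norm (fst p)"
    and x0: "(x0, norm x0) \<in> M" using good unfolding hb_good_def by blast+
  have lin': "(c *\<^sub>R x + d *\<^sub>R x', c * a + d * a') \<in> M" if "(x,a) \<in> M" "(x',a') \<in> M" for x a x' a' c d
    using lin[OF that] by simp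
  have bnd': "a \<le> norm x" if "(x,a) \<in> M" for x a using bnd[OF that] by simp
  define L where "L = (\<lambda>p. snd p - norm (fst p - y)) ` M"
  have Lne: "L \<noteq> {}" using x0 unfolding L_def by blast
  have Lub: "l \<le> norm (x + y) - a" if "l \<in> L" "(x,a) \<in> M" for l x a
  proof -
    from that obtain x' a' where xa': "(x',a') \<in> M" "l = a' - norm (x' - y)" unfolding L_def by auto
    have "(1 *\<^sub>R x + 1 *\<^sub>R x', 1 * a + 1 * a') \<in> M" by (rule lin'[OF that(2) xa'(1)])
    hence "a + a' \<le> norm (x + x')" using bnd' by fastforce
    also have "\<dots> \<le> norm (x + y) + norm (x' - y)"
      using norm_triangle_ineq[of "x + y" "x' - y"] by simp
    finally show ?thesis using xa' by simp
  qed
  have bddL: "bdd_above L" using Lub x0 by (meson bdd_aboveI)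
  define c where "c = Sup L"
  have c1: "a' - norm (x' - y) \<le> c" if "(x',a') \<in> M" for x' a'
    unfolding c_def using bddL that by (intro cSup_upper) (auto simp: L_def image_iff intro!: bexI[of _ "(x',a')"])
  have c2: "c \<le> norm (x + y) - a" if "(x,a) \<in> M" for x a
    unfolding c_def using Lne Lub[OF _ that] by (intro cSup_least) auto
  define M' where "M' = {(x + t *\<^sub>R y, a + t * c) | x a t. (x,a) \<in> M}"
  have goodM': "hb_good x0 M'"
    unfolding hb_good_def
  proof (intro conjI ballI allI)
    show "(x0, norm x0) \<in> M'" unfolding M'_def using x0 by (intro CollectI exI[of _ x0] exI[of _ "norm x0"] exI[of _ 0]) simp
  next
    fix p q and e f :: real assume "p \<in> M'" "q \<in> M'"
    then obtain x a t x' a' t' where p: "p = (x + t *\<^sub>R y, a + t * c)" "(x,a) \<in> M"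
      and q: "q = (x' + t' *\<^sub>R y, a' + t' * c)" "(x',a') \<in> M" unfolding M'_def by blast
    have "(e *\<^sub>R x + f *\<^sub>R x', e * a + f * a') \<in> M" by (rule lin'[OF p(2) q(2)])
    thus "(e *\<^sub>R fst p + f *\<^sub>R fst q, e * snd p + f * snd q) \<in> M'"
      unfolding M'_def p q
      by (intro CollectI exI[of _ "e *\<^sub>R x + f *\<^sub>R x'"] exI[of _ "e * a + f * a'"] exI[of _ "e * t + f * t'"])
         (simp add: algebra_simps scaleR_add_left)
  next
    fix p assume "p \<in> M'"
    then obtain x a t where p: "p = (x + t *\<^sub>R y, a + t * c)" and xa: "(x,a) \<in> M" unfolding M'_def by blast
    have "a + t * c \<le> norm (x + t *\<^sub>R y)"
    proof (cases t "0::real" rule: linorder_cases)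
      case equal thus ?thesis using bnd' xa by simp
    next
      case greater
      have "((1/t) *\<^sub>R x + 0 *\<^sub>R x, (1/t) * a + 0 * a) \<in> M" by (rule lin'[OF xa xa])
      hence "c \<le> norm ((1/t) *\<^sub>R x + y) - (1/t) * a" using c2 by simp
      hence "t * c \<le> t * (norm ((1/t) *\<^sub>R x + y) - (1/t) * a)" using greater by (simp add: mult_left_mono)
      also have "\<dots> = norm (t *\<^sub>R ((1/t) *\<^sub>R x + y)) - a" using greater by (simp add: right_diff_distrib)
      also have "t *\<^sub>R ((1/t) *\<^sub>R x + y) = x + t *\<^sub>R y" using greater by (simp add: algebra_simps)
      finally show ?thesis by simp
    next
      case less
      define s where "s = - t"
      have s: "s > 0" using less s_def by simp
      have "((1/s) *\<^sub>R x + 0 *\<^sub>R x, (1/s) * a + 0 * a) \<in> M" by (rule lin'[OF xa xa])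
      hence "(1/s) * a - norm ((1/s) *\<^sub>R x - y) \<le> c" using c1 by simp
      hence "s * ((1/s) * a - norm ((1/s) *\<^sub>R x - y)) \<le> s * c" using s by (simp add: mult_left_mono)
      hence "a - norm (s *\<^sub>R ((1/s) *\<^sub>R x - y)) \<le> s * c" using s by (simp add: right_diff_distrib)
      moreover have "s *\<^sub>R ((1/s) *\<^sub>R x - y) = x + t *\<^sub>R y" using s by (simp add: algebra_simps s_def)
      ultimately have "a - norm (x + t *\<^sub>R y) \<le> s * c" by (simp only:)
      thus ?thesis unfolding s_def by simp
    qed
    thus "snd p \<le> norm (fst p)" using p by simp
  qed
  have sub: "M \<subseteq> M'"
  proof
    fix p assume "p \<in> M"
    thus "p \<in> M'" unfolding M'_def by (intro CollectI exI[of _ "fst p"] exI[of _ "snd p"] exI[of _ 0]) simp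
  qed
  have "(0 + 1 *\<^sub>R y, 0 + 1 * c) \<in> M'"
  proof -
    have "(0 *\<^sub>R x0 + 0 *\<^sub>R x0, 0 * norm x0 + 0 * norm x0) \<in> M" by (rule lin'[OF x0 x0])
    hence "(0, 0) \<in> M" by simp
    thus ?thesis unfolding M'_def by blast
  qed
  hence "(y, c) \<in> M'" by simp
  hence "M' \<noteq> M" using y by blast
  thus ?thesis using goodM' sub by blast
qed

theorem hahn_banach_norming:
  fixes x0 :: "'a::real_normed_vector"
  shows "\<exists>\<phi>::'a \<Rightarrow>\<^sub>L real. norm \<phi> \<le> 1 \<and> blinfun_apply \<phi> x0 = norm x0"
proof -
  let ?A = "{G. hb_good x0 G}"
  have "\<exists>M\<in>?A. \<forall>X\<in>?A. M \<subseteq> X \<longrightarrow> X = M"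
  proof (rule Zorn_Lemma2, rule ballI)
    fix C assume C: "C \<in> chains ?A"
    show "\<exists>U\<in>?A. \<forall>X\<in>C. X \<subseteq> U"
    proof (cases "C = {}")
      case True thus ?thesis using hb_init[of x0] by blast
    next
      case False
      have CA: "C \<subseteq> ?A" using C chainsD2 by blast
      have "hb_good x0 (\<Union>C)"
        unfolding hb_good_def
      proof (intro conjI ballI allI)
        obtain G where "G \<in> C" using False by blast
        thus "(x0, norm x0) \<in> \<Union>C" using CA unfolding hb_good_def by blast
      next
        fix p q and c d :: real assume "p \<in> \<Union>C" "q \<in> \<Union>C"
        then obtain G1 G2 where "G1 \<in> C" "G2 \<in> C" "p \<in> G1" "q \<in> G2" by blast
        moreover have "G1 \<subseteq> G2 \<or> G2 \<subseteq> G1" using chainsD[OF C \<open>G1 \<in> C\<close> \<open>G2 \<in> C\<close>] .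
        ultimately obtain G where "G \<in> C" "p \<in> G" "q \<in> G" by blast
        hence "(c *\<^sub>R fst p + d *\<^sub>R fst q, c * snd p + d * snd q) \<in> G" using CA unfolding hb_good_def by blast
        thus "(c *\<^sub>R fst p + d *\<^sub>R fst q, c * snd p + d * snd q) \<in> \<Union>C" using \<open>G \<in> C\<close> by blast
      next
        fix p assume "p \<in> \<Union>C"
        thus "snd p \<le> norm (fst p)" using CA unfolding hb_good_def by blast
      qed
      thus ?thesis by blast
    qed
  qed
  then obtain M where M: "hb_good x0 M" and max: "\<And>X. hb_good x0 X \<Longrightarrow> M \<subseteq> X \<Longrightarrow> X = M" by blast
  have tot: "\<exists>a. (x, a) \<in> M" for x
    using hb_extend[OF M, of x] max by blast
  define f where "f x = (THE a. (x, a) \<in> M)" for x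
  have fM: "(x, f x) \<in> M" for x
    unfolding f_def using tot[of x] hb_func[OF M] by (metis theI)
  have feq: "f x = a" if "(x,a) \<in> M" for x a using hb_func[OF M fM that] .
  have lin: "(c *\<^sub>R x + d *\<^sub>R x', c * a + d * a') \<in> M" if "(x,a) \<in> M" "(x',a') \<in> M" for x a x' a' c d
    using M that unfolding hb_good_def by (metis fst_conv snd_conv)
  have fadd: "f (x + y) = f x + f y" for x y
    using feq[OF lin[OF fM[of x] fM[of y], of 1 1]] by simp
  have fscale: "f (c *\<^sub>R x) = c * f x" for c x
    using feq[OF lin[OF fM[of x] fM[of x], of c 0]] by simp
  have fb: "f x \<le> norm x" for x using M fM[of x] unfolding hb_good_def by force
  have fabs: "\<bar>f x\<bar> \<le> norm x" for x
  proof -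
    have "f (-x) \<le> norm (-x)" by (rule fb)
    moreover have "f (-x) = - f x" using fscale[of "-1" x] by simp
    ultimately show ?thesis using fb[of x] by simp
  qed
  have bl: "bounded_linear f"
    by (rule bounded_linear_intro[of _ 1]) (auto simp: fadd fscale fabs)
  have "norm (Blinfun f) \<le> 1"
    by (rule norm_blinfun_bound) (auto simp: bounded_linear_Blinfun_apply[OF bl] fabs)
  moreover have "blinfun_apply (Blinfun f) x0 = norm x0"
    using feq[of x0 "norm x0"] M unfolding hb_good_def by (simp add: bounded_linear_Blinfun_apply[OF bl])
  ultimately show ?thesis by blast
qed

corollary hahn_banach_sep:
  fixes w :: "'a::real_normed_vector"
  assumes "\<And>\<phi>::'a \<Rightarrow>\<^sub>L real. blinfun_apply \<phi> w = 0"
  shows "w = 0"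
  using hahn_banach_norming[of w] assms by auto



lemma baire_banach:
  fixes F :: "nat \<Rightarrow> 'a::{real_normed_vector,complete_space} set"
  assumes cl: "\<And>n. closed (F n)" and un: "(\<Union>n. F n) = UNIV"
  shows "\<exists>n. interior (F n) \<noteq> {}"
proof (rule ccontr)
  assume "\<not> ?thesis"
  hence e: "\<And>n. interior (F n) = {}" by simp
  have "euclidean interior_of \<Union>(range F) = {}"
  proof (rule Baire_category_alt)
    show "countable (range F)" by simp
    show "completely_metrizable_space (euclidean :: 'a topology) \<or> locally_compact_space (euclidean :: 'a topology) \<and> regular_space (euclidean :: 'a topology)"
      using completely_metrizable_space_euclidean by blast
    fix T assume "T \<in> range F"
    then obtain n where "T = F n" by blast
    thus "closedin euclidean T \<and> euclidean interior_of T = {}"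
      using cl[of n] e[of n] by simp
  qed
  thus False using un by simp
qed

lemma open_mapping_approx:
  fixes f :: "'a::{real_normed_vector,complete_space} \<Rightarrow> 'b::{real_normed_vector,complete_space}"
  assumes bl: "bounded_linear f" and su: "surj f"
  shows "\<exists>K>0. \<forall>y. \<exists>x. norm x \<le> K * norm y \<and> norm (y - f x) \<le> norm y / 2"
proof -
  interpret f: bounded_linear f by fact
  define F where "F n = closure (f ` cball 0 (real n))" for n
  have "(\<Union>n. F n) = UNIV"
  proof (rule set_eqI, rule iffI)
    fix y :: 'b
    obtain x where "y = f x" using su by (metis surjD)
    obtain n :: nat where "norm x \<le> real n" using real_arch_simple by blast
    hence "y \<in> F n" unfolding F_def using \<open>y = f x\<close> closure_subset by fastforce
    thus "y \<in> (\<Union>n. F n)" by blast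
  qed simp
  then obtain n where "interior (F n) \<noteq> {}" using baire_banach[of F] unfolding F_def by auto
  then obtain y0 where "y0 \<in> interior (F n)" by blast
  then obtain r where r: "r > 0" "ball y0 r \<subseteq> F n"
    using mem_interior by blast
  have A: "\<exists>x. norm x \<le> 2 * real n \<and> norm (y - f x) < e" if y: "norm y < r" and e: "e > 0" for y e
  proof -
    have "y0 + y \<in> F n" using r y by (intro subsetD[OF r(2)]) (simp add: dist_norm)
    then obtain z1 where z1: "z1 \<in> f ` cball 0 (real n)" "dist z1 (y0 + y) < e/2"
      unfolding F_def closure_approachable using e half_gt_zero by blast
    have "y0 \<in> F n" using r by (intro subsetD[OF r(2)]) simp
    then obtain z2 where z2: "z2 \<in> f ` cball 0 (real n)" "dist z2 y0 < e/2"
      unfolding F_def closure_approachable using e half_gt_zero by blast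
    obtain x1 x2 where x: "z1 = f x1" "norm x1 \<le> real n" "z2 = f x2" "norm x2 \<le> real n"
      using z1 z2 by auto
    have "norm (x1 - x2) \<le> 2 * real n" using norm_triangle_ineq4[of x1 x2] x by simp
    moreover have "norm (y - f (x1 - x2)) < e"
    proof -
      have "y - f (x1 - x2) = (y0 + y - z1) - (y0 - z2)" using x by (simp add: f.diff algebra_simps)
      hence "norm (y - f (x1 - x2)) \<le> norm (y0 + y - z1) + norm (y0 - z2)"
        using norm_triangle_ineq4 by metis
      also have "\<dots> < e/2 + e/2" using z1 z2 by (intro add_strict_mono) (auto simp: dist_norm norm_minus_commute)
      finally show ?thesis by simp
    qed
    ultimately show ?thesis by blast
  qed
  define K where "K = 4 * real n / r + 1"
  have "4 * real n / r \<ge> 0" using r by simp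
  hence K: "K > 0" unfolding K_def by linarith
  have "\<exists>x. norm x \<le> K * norm y \<and> norm (y - f x) \<le> norm y / 2" for y
  proof (cases "y = 0")
    case True thus ?thesis by (intro exI[of _ 0]) simp
  next
    case False
    hence ny: "norm y > 0" by simp
    define s where "s = (r/2) / norm y"
    have s: "s > 0" unfolding s_def using r ny by simp
    have "norm (s *\<^sub>R y) < r" using ny r by (simp add: s_def)
    then obtain x' where x': "norm x' \<le> 2 * real n" "norm (s *\<^sub>R y - f x') < s * (norm y / 2)"
      using A[of "s *\<^sub>R y" "s * (norm y / 2)"] s ny by auto
    define x where "x = (1/s) *\<^sub>R x'"
    have "norm x = norm x' / s" unfolding x_def using s by simp
    also have "\<dots> \<le> 2 * real n / s" using x' s by (simp add: divide_right_mono)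
    also have "2 * real n / s = 4 * real n / r * norm y" unfolding s_def using r ny by (simp add: field_simps)
    also have "\<dots> \<le> K * norm y" unfolding K_def using ny by (simp add: distrib_right)
    finally have nx: "norm x \<le> K * norm y" .
    have "f x = (1/s) *\<^sub>R f x'" unfolding x_def by (rule f.scaleR)
    hence "s *\<^sub>R f x = f x'" using s by simp
    hence "s *\<^sub>R y - f x' = s *\<^sub>R (y - f x)" by (simp add: scaleR_diff_right)
    hence "s * norm (y - f x) < s * (norm y / 2)" using x' s by simp
    hence "norm (y - f x) < norm y / 2" using s by simp
    thus ?thesis using nx by (meson less_imp_le)
  qed
  thus ?thesis using K by blast
qed

theorem open_mapping:
  fixes f :: "'a::{real_normed_vector,complete_space} \<Rightarrow> 'b::{real_normed_vector,complete_space}"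
  assumes bl: "bounded_linear f" and su: "surj f"
  shows "\<exists>K>0. \<forall>y. \<exists>x. f x = y \<and> norm x \<le> K * norm y"
proof -
  interpret f: bounded_linear f by fact
  obtain K where K: "K > 0" "\<And>y. \<exists>x. norm x \<le> K * norm y \<and> norm (y - f x) \<le> norm y / 2"
    using open_mapping_approx[OF bl su] by blast
  then obtain sel where sel: "\<And>y. norm (sel y) \<le> K * norm y" "\<And>y. norm (y - f (sel y)) \<le> norm y / 2"
    by metis
  have "\<exists>x. f x = y \<and> norm x \<le> (2 * K) * norm y" for y
  proof -
    define r where "r = rec_nat y (\<lambda>_ z. z - f (sel z))"
    have r0: "r 0 = y" and rS: "r (Suc n) = r n - f (sel (r n))" for n unfolding r_def by simp_all
    define x where "x n = sel (r n)" for n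
    have nr: "norm (r n) \<le> norm y * (1/2)^n" for n
    proof (induction n)
      case 0 thus ?case by (simp add: r0)
    next
      case (Suc n)
      have "norm (r (Suc n)) \<le> norm (r n) / 2" unfolding rS using sel(2) .
      also have "\<dots> \<le> norm y * (1/2)^n / 2" using Suc by simp
      finally show ?case by simp
    qed
    have nx: "norm (x n) \<le> K * norm y * (1/2)^n" for n
    proof -
      have "norm (x n) \<le> K * norm (r n)" unfolding x_def by (rule sel(1))
      also have "\<dots> \<le> K * (norm y * (1/2)^n)" using nr K by (simp add: mult_left_mono)
      finally show ?thesis by simp
    qed
    have geo0: "(\<Sum>k\<le>n. (1/2::real)^k) = 2 - (1/2)^n" for n by (induction n) simp_all
    have geo: "(\<Sum>k\<in>{a<..b}. (1/2::real)^k) \<le> (1/2)^a" if "a < b" for a b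
    proof -
      have "{a<..b} = {..b} - {..a}" by auto
      hence "(\<Sum>k\<in>{a<..b}. (1/2::real)^k) = (\<Sum>k\<le>b. (1/2::real)^k) - (\<Sum>k\<le>a. (1/2)^k)"
        using that by (simp add: sum_diff)
      also have "\<dots> = (1/2)^a - (1/2)^b" by (simp add: geo0)
      finally show ?thesis by simp
    qed
    have partial: "norm (sum x {a<..b}) \<le> K * norm y * (1/2)^a" if "a < b" for a b
    proof -
      have "norm (sum x {a<..b}) \<le> (\<Sum>k\<in>{a<..b}. norm (x k))" by (rule norm_sum)
      also have "\<dots> \<le> (\<Sum>k\<in>{a<..b}. K * norm y * (1/2)^k)" by (intro sum_mono nx)
      also have "\<dots> = K * norm y * (\<Sum>k\<in>{a<..b}. (1/2)^k)" by (simp add: sum_distrib_left)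
      also have "\<dots> \<le> K * norm y * (1/2)^a" using geo[OF that] K by (intro mult_left_mono) auto
      finally show ?thesis .
    qed
    have sx: "summable x"
    proof (rule summable_bounded_partials[where g = "\<lambda>a. K * norm y * (1/2)^a"])
      show "eventually (\<lambda>x0. \<forall>a\<ge>x0. \<forall>b>a. norm (sum x {a<..b}) \<le> K * norm y * (1/2)^a) sequentially"
        using partial by (intro always_eventually) auto
      show "(\<lambda>a. K * norm y * (1/2::real)^a) \<longlonglongrightarrow> 0" by (intro tendsto_mult_right_zero LIMSEQ_power_zero) simp
    qed
    have psum: "f (\<Sum>k<n. x k) = y - r n" for n
    proof (induction n)
      case 0 thus ?case by (simp add: r0 f.zero)
    next
      case (Suc n)
      thus ?case by (simp add: f.add rS x_def)
    qed
    have rlim: "r \<longlonglongrightarrow> 0"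
    proof (rule tendsto_norm_zero_cancel, rule Lim_null_comparison)
      show "\<forall>\<^sub>F n in sequentially. norm (norm (r n)) \<le> norm y * (1/2)^n" using nr by simp
      show "(\<lambda>n. norm y * (1/2::real)^n) \<longlonglongrightarrow> 0"
        by (intro tendsto_mult_right_zero LIMSEQ_power_zero) simp
    qed
    have l1: "(\<lambda>n. f (\<Sum>k<n. x k)) \<longlonglongrightarrow> y"
      unfolding psum using tendsto_diff[OF tendsto_const[of y] rlim] by simp
    have l2: "(\<lambda>n. f (\<Sum>k<n. x k)) \<longlonglongrightarrow> f (suminf x)"
      by (rule f.tendsto[OF summable_LIMSEQ[OF sx]])
    have fx: "f (suminf x) = y" using LIMSEQ_unique[OF l2 l1] .
    have pb: "norm (\<Sum>k<n. x k) \<le> 2 * K * norm y" for n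
    proof -
      have "norm (\<Sum>k<n. x k) \<le> (\<Sum>k<n. norm (x k))" by (rule norm_sum)
      also have "\<dots> \<le> (\<Sum>k<n. K * norm y * (1/2)^k)" by (intro sum_mono nx)
      also have "\<dots> = K * norm y * (\<Sum>k<n. (1/2)^k)" by (simp add: sum_distrib_left)
      also have "\<dots> \<le> K * norm y * 2"
      proof (rule mult_left_mono)
        have "(\<Sum>k<n. (1/2::real)^k) \<le> (\<Sum>k\<le>n. (1/2)^k)" by (intro sum_mono2) auto
        also have "\<dots> \<le> 2" by (simp add: geo0)
        finally show "(\<Sum>k<n. (1/2::real)^k) \<le> 2" .
        show "0 \<le> K * norm y" using K by simp
      qed
      finally show ?thesis by (simp add: ac_simps)
    qed
    have "norm (suminf x) \<le> 2 * K * norm y"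
      by (rule LIMSEQ_le_const2[OF tendsto_norm[OF summable_LIMSEQ[OF sx]]]) (use pb in auto)
    thus ?thesis using fx by (intro exI[of _ "suminf x"]) (simp add: algebra_simps)
  qed
  thus ?thesis using K by (intro exI[of _ "2*K"]) auto
qed

theorem bounded_inverse:
  fixes f :: "'a::banach \<Rightarrow> 'b::banach"
  assumes bl: "bounded_linear f" and bij: "bij f"
  shows "\<exists>g. bounded_linear g \<and> (\<forall>x. g (f x) = x) \<and> (\<forall>y. f (g y) = y)"
proof -
  interpret f: bounded_linear f by fact
  obtain K where K: "K > 0" "\<And>y. \<exists>x. f x = y \<and> norm x \<le> K * norm y"
    using open_mapping[OF bl bij_is_surj[OF bij]] by blast
  define g where "g = inv f"
  have gf: "g (f x) = x" for x unfolding g_def using bij by (simp add: bij_is_inj)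
  have fg: "f (g y) = y" for y unfolding g_def using bij by (simp add: bij_is_surj surj_f_inv_f)
  have "bounded_linear g"
  proof (rule bounded_linear_intro[of _ K])
    show "g (a + b) = g a + g b" for a b
    proof -
      have "f (g (a + b)) = f (g a + g b)" by (simp add: fg f.add)
      hence "g (f (g (a + b))) = g (f (g a + g b))" by simp
      thus ?thesis by (simp only: gf)
    qed
    show "g (c *\<^sub>R a) = c *\<^sub>R g a" for c a
    proof -
      have "f (g (c *\<^sub>R a)) = f (c *\<^sub>R g a)" by (simp add: fg f.scaleR)
      hence "g (f (g (c *\<^sub>R a))) = g (f (c *\<^sub>R g a))" by simp
      thus ?thesis by (simp only: gf)
    qed
    show "norm (g y) \<le> norm y * K" for y
      using K(2)[of y] gf by (metis mult.commute)
  qed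
  thus ?thesis using gf fg by blast
qed

lemma dense_eq:
  fixes f g :: "'a::topological_space \<Rightarrow> 'b::t2_space"
  assumes "closure S = UNIV" "continuous_on UNIV f" "continuous_on UNIV g" "\<And>x. x \<in> S \<Longrightarrow> f x = g x"
  shows "f x = g x"
proof -
  have "closed {x. f x = g x}" using assms(2,3) by (intro closed_Collect_eq) auto
  hence "closure S \<subseteq> {x. f x = g x}" using assms(4) by (intro closure_minimal) auto
  thus ?thesis using assms(1) by auto
qed

lemma dense_le:
  fixes f g :: "'a::topological_space \<Rightarrow> real"
  assumes "closure S = UNIV" "continuous_on UNIV f" "continuous_on UNIV g" "\<And>x. x \<in> S \<Longrightarrow> f x \<le> g x"
  shows "f x \<le> g x"
proof -
  have "closed {x. f x \<le> g x}" using assms(2,3) by (intro closed_Collect_le) auto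
  hence "closure S \<subseteq> {x. f x \<le> g x}" using assms(4) by (intro closure_minimal) auto
  thus ?thesis using assms(1) by auto
qed

lemma blinfun_dense_eq:
  fixes f g :: "'a::real_normed_vector \<Rightarrow>\<^sub>L 'b::real_normed_vector"
  assumes "closure S = UNIV" "\<And>x. x \<in> S \<Longrightarrow> blinfun_apply f x = blinfun_apply g x"
  shows "f = g"
  by (rule blinfun_eqI, rule dense_eq[OF assms(1)]) (auto intro: continuous_intros assms(2))

lemma extend_dense:
  fixes p :: "'c::real_normed_vector \<Rightarrow> 'a::real_normed_vector" and q :: "'c \<Rightarrow> 'b::{real_normed_vector,complete_space}"
  assumes p: "bounded_linear p" and q: "bounded_linear q" and dense: "closure (range p) = UNIV"
    and bnd: "\<And>c. norm (q c) \<le> C * norm (p c)"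
  shows "\<exists>g::'a \<Rightarrow>\<^sub>L 'b. \<forall>c. blinfun_apply g (p c) = q c"
proof -
  interpret p: bounded_linear p by fact
  interpret q: bounded_linear q by fact
  define f where "f y = q (SOME c. p c = y)" for y
  have wd: "q c = q c'" if "p c = p c'" for c c'
  proof -
    have "norm (q (c - c')) \<le> C * norm (p (c - c'))" by (rule bnd)
    also have "p (c - c') = 0" using that by (simp add: p.diff)
    finally have "norm (q (c - c')) \<le> 0" by simp
    thus ?thesis by (simp add: q.diff)
  qed
  have fp: "f (p c) = q c" for c
    unfolding f_def by (rule wd, rule someI_ex) auto
  define C' where "C' = max C 0"
  have bnd': "norm (f y - f y') \<le> C' * norm (y - y')" if yy: "y \<in> range p" "y' \<in> range p" for y y'
  proof -
    obtain c c' where "y = p c" "y' = p c'" using yy by blast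
    hence "f y - f y' = q (c - c')" "y - y' = p (c - c')" by (simp_all add: fp q.diff p.diff)
    moreover have "norm (q (c - c')) \<le> C' * norm (p (c - c'))"
      using bnd[of "c - c'"] unfolding C'_def by (meson max.cobounded1 mult_right_mono norm_ge_zero order_trans)
    ultimately show ?thesis by simp
  qed
  have uc: "uniformly_continuous_on (range p) f"
    unfolding uniformly_continuous_on_def
  proof (intro allI impI)
    fix e :: real assume e: "e > 0"
    show "\<exists>d>0. \<forall>x\<in>range p. \<forall>x'\<in>range p. dist x' x < d \<longrightarrow> dist (f x') (f x) < e"
    proof (intro exI[of _ "e / (C' + 1)"] conjI ballI impI)
      show "e / (C' + 1) > 0" using e unfolding C'_def by (simp add: add_nonneg_pos)
      fix x x' assume xx: "x \<in> range p" "x' \<in> range p" "dist x' x < e / (C' + 1)"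
      have "dist (f x') (f x) \<le> C' * dist x' x" using bnd'[OF xx(2,1)] by (simp add: dist_norm)
      also have "\<dots> \<le> C' * (e / (C' + 1))" using xx(3) unfolding C'_def by (intro mult_left_mono) auto
      also have "\<dots> < e" using e unfolding C'_def by (simp add: field_simps)
      finally show "dist (f x') (f x) < e" .
    qed
  qed
  obtain g where g: "uniformly_continuous_on (closure (range p)) g" "\<And>x. x \<in> range p \<Longrightarrow> f x = g x"
    using uniformly_continuous_on_extension_on_closure[OF uc] by metis
  have gc: "continuous_on UNIV g" using g(1) dense uniformly_continuous_imp_continuous by metis
  have gp: "g (p c) = q c" for c using g(2)[of "p c"] fp by simp
  have dense2: "closure (range p \<times> range p) = UNIV" using dense by (simp add: closure_Times)
  have gadd: "g (x + y) = g x + g y" for x y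
  proof -
    have "(\<lambda>z. g (fst z + snd z)) (x, y) = (\<lambda>z. g (fst z) + g (snd z)) (x, y)"
    proof (rule dense_eq[OF dense2])
      show "continuous_on UNIV (\<lambda>z. g (fst z + snd z))"
        by (rule continuous_on_compose2[OF gc]) (auto intro!: continuous_intros)
      show "continuous_on UNIV (\<lambda>z. g (fst z) + g (snd z))"
        by (intro continuous_on_add; rule continuous_on_compose2[OF gc]) (auto intro!: continuous_intros)
      fix z assume "z \<in> range p \<times> range p"
      then obtain a b where "z = (p a, p b)" by auto
      thus "g (fst z + snd z) = g (fst z) + g (snd z)" by (simp add: p.add[symmetric] gp q.add)
    qed
    thus ?thesis by simp
  qed
  have gscale: "g (r *\<^sub>R x) = r *\<^sub>R g x" for r x
  proof (rule dense_eq[OF dense])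
    show "continuous_on UNIV (\<lambda>x. g (r *\<^sub>R x))"
      by (rule continuous_on_compose2[OF gc]) (auto intro!: continuous_intros)
    show "continuous_on UNIV (\<lambda>x. r *\<^sub>R g x)" by (intro continuous_intros gc)
    fix x assume "x \<in> range p"
    then obtain a where "x = p a" by auto
    thus "g (r *\<^sub>R x) = r *\<^sub>R g x" by (simp add: p.scaleR[symmetric] gp q.scaleR)
  qed
  have gb: "norm (g x) \<le> C' * norm x" for x
  proof (rule dense_le[OF dense])
    show "continuous_on UNIV (\<lambda>x. norm (g x))" by (intro continuous_intros gc)
    show "continuous_on UNIV (\<lambda>x. C' * norm x)" by (intro continuous_intros)
    fix x assume "x \<in> range p"
    then obtain a where "x = p a" by auto
    have "norm (q a) \<le> C' * norm (p a)"
      using bnd[of a] unfolding C'_def by (meson max.cobounded1 mult_right_mono norm_ge_zero order_trans)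
    thus "norm (g x) \<le> C' * norm x" using \<open>x = p a\<close> gp by simp
  qed
  have bl: "bounded_linear g"
    by (rule bounded_linear_intro[of _ C']) (auto simp: gadd gscale gb mult.commute)
  show ?thesis
    by (intro exI[of _ "Blinfun g"]) (simp add: bounded_linear_Blinfun_apply[OF bl] gp)
qed

lemma bl_on_UNIV: "bounded_linear f \<Longrightarrow> bounded_linear_on UNIV f"
proof -
  assume "bounded_linear f"
  then interpret f: bounded_linear f .
  obtain K where "\<And>x. norm (f x) \<le> norm x * K" using f.bounded by blast
  thus ?thesis unfolding bounded_linear_on_def by (auto simp: f.add f.scaleR mult.commute)
qed

lemma ph_basic:
  fixes i :: "'x::banach \<Rightarrow>\<^sub>L 'h::{real_inner,complete_space}" and j :: "'h \<Rightarrow>\<^sub>L 'y::banach"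
    and J :: "'x \<Rightarrow>\<^sub>L ('y \<Rightarrow>\<^sub>L real)"
  assumes "para_hilbert i j J"
  shows ph_compat: "\<And>u v. J u (j v) = inner (i u) v"
    and ph_inj: "\<And>u. (\<And>w. J u w = 0) \<Longrightarrow> u = 0"
    and ph_surj: "\<And>\<phi>. \<exists>u. J u = \<phi>"
    and ph_bnd: "\<exists>C. \<forall>u M. M \<ge> 0 \<longrightarrow> (\<forall>w. \<bar>J u w\<bar> \<le> M * norm w) \<longrightarrow> norm u \<le> C * M"
    and ph_idense: "closure (range i) = UNIV"
    and ph_jdense: "closure (range j) = UNIV"
    and ph_iinj: "inj (blinfun_apply i)"
    and ph_jinj: "inj (blinfun_apply j)"
proof -
  have PH: "para_hilbert_on UNIV UNIV UNIV (blinfun_apply i) (blinfun_apply j) (\<lambda>u w. blinfun_apply (blinfun_apply J u) w)"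
    using assms unfolding para_hilbert_def .
  have c: "\<forall>u\<in>UNIV. \<forall>v\<in>UNIV. inner (i u) v = J u (j v)"
    using PH unfolding para_hilbert_on_def by (elim conjE) assumption
  have n: "\<forall>u\<in>UNIV. (\<forall>w\<in>UNIV. J u w = 0) \<longrightarrow> u = 0"
    using PH unfolding para_hilbert_on_def by (elim conjE) assumption
  have b: "\<exists>C. \<forall>u\<in>UNIV. \<forall>M\<ge>0. (\<forall>w\<in>UNIV. \<bar>J u w\<bar> \<le> M * norm w) \<longrightarrow> norm u \<le> C * M"
    using PH unfolding para_hilbert_on_def by (elim conjE) assumption
  have di: "UNIV \<subseteq> closure (range i)"
    using PH unfolding para_hilbert_on_def by (elim conjE) assumption
  have dj: "UNIV \<subseteq> closure (range j)"
    using PH unfolding para_hilbert_on_def by (elim conjE) assumption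
  show "inj (blinfun_apply i)"
    using PH unfolding para_hilbert_on_def by (elim conjE) assumption
  show "inj (blinfun_apply j)"
    using PH unfolding para_hilbert_on_def by (elim conjE) assumption
  have s: "\<forall>\<phi>. bounded_linear_on UNIV \<phi> \<longrightarrow> (\<exists>u\<in>UNIV. \<forall>w\<in>UNIV. J u w = \<phi> w)"
    using PH unfolding para_hilbert_on_def by (elim conjE) assumption
  show "\<And>u v. J u (j v) = inner (i u) v" using c by simp
  show "\<And>u. (\<And>w. J u w = 0) \<Longrightarrow> u = 0" using n by blast
  show "\<exists>C. \<forall>u M. M \<ge> 0 \<longrightarrow> (\<forall>w. \<bar>J u w\<bar> \<le> M * norm w) \<longrightarrow> norm u \<le> C * M" using b by blast
  show "closure (range i) = UNIV" using di by blast
  show "closure (range j) = UNIV" using dj by blast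
  fix \<phi> :: "'y \<Rightarrow>\<^sub>L real"
  have "bounded_linear_on UNIV (blinfun_apply \<phi>)" by (rule bl_on_UNIV) (rule blinfun.bounded_linear_right)
  then obtain u where "\<forall>w. J u w = \<phi> w" using s by blast
  hence "J u = \<phi>" by (intro blinfun_eqI) simp
  thus "\<exists>u. J u = \<phi>" by blast
qed

lemma bij_blinfun_inv:
  fixes f :: "'a::banach \<Rightarrow>\<^sub>L 'b::banach"
  assumes "bij (blinfun_apply f)"
  shows "\<exists>g::'b \<Rightarrow>\<^sub>L 'a. (\<forall>x. g (f x) = x) \<and> (\<forall>y. f (g y) = y)"
proof -
  obtain g where "bounded_linear g" "\<forall>x. g (f x) = x" "\<forall>y. f (g y) = y"
    using bounded_inverse[OF blinfun.bounded_linear_right assms] by blast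
  thus ?thesis by (intro exI[of _ "Blinfun g"]) (simp add: bounded_linear_Blinfun_apply)
qed

lemma K_map_apply:
  fixes J :: "'x::banach \<Rightarrow>\<^sub>L ('y::banach \<Rightarrow>\<^sub>L real)"
  shows "blinfun_apply (K_map J w) u = J u w"
proof -
  have "bounded_linear (\<lambda>u. blinfun_apply (blinfun_apply J u) w)"
    by (rule bounded_linear_compose[OF blinfun.bounded_linear_left blinfun.bounded_linear_right])
  thus ?thesis unfolding K_map_def by (simp add: bounded_linear_Blinfun_apply)
qed

lemma K_map_bl:
  fixes J :: "'x::banach \<Rightarrow>\<^sub>L ('y::banach \<Rightarrow>\<^sub>L real)"
  shows "bounded_linear (K_map J)"
proof (rule bounded_linear_intro[of _ "norm J"])
  show "K_map J (a + b) = K_map J a + K_map J b" for a b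
    by (rule blinfun_eqI) (simp add: K_map_apply blinfun.add_right plus_blinfun.rep_eq)
  show "K_map J (c *\<^sub>R a) = c *\<^sub>R K_map J a" for c a
    by (rule blinfun_eqI) (simp add: K_map_apply blinfun.scaleR_right scaleR_blinfun.rep_eq)
  show "norm (K_map J w) \<le> norm w * norm J" for w
  proof (rule norm_blinfun_bound)
    show "0 \<le> norm w * norm J" by simp
    fix u
    have "norm (K_map J w u) = norm (J u w)" by (simp add: K_map_apply)
    also have "\<dots> \<le> norm (J u) * norm w" by (rule norm_blinfun)
    also have "\<dots> \<le> (norm J * norm u) * norm w" by (intro mult_right_mono norm_blinfun) simp
    finally show "norm (K_map J w u) \<le> norm w * norm J * norm u" by (simp add: ac_simps)
  qed
qed

locale setting =
  fixes i1 :: "'x1::banach \<Rightarrow>\<^sub>L 'h1::{real_inner,complete_space}"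
    and j1 :: "'h1 \<Rightarrow>\<^sub>L 'y1::banach"
    and J1 :: "'x1 \<Rightarrow>\<^sub>L ('y1 \<Rightarrow>\<^sub>L real)"
    and i2 :: "'x2::banach \<Rightarrow>\<^sub>L 'h2::{real_inner,complete_space}"
    and j2 :: "'h2 \<Rightarrow>\<^sub>L 'y2::banach"
    and J2 :: "'x2 \<Rightarrow>\<^sub>L ('y2 \<Rightarrow>\<^sub>L real)"
    and AX :: "'x1 \<Rightarrow>\<^sub>L 'x2" and AH :: "'h1 \<Rightarrow>\<^sub>L 'h2" and AY :: "'y1 \<Rightarrow>\<^sub>L 'y2"
  assumes E1: "para_hilbert i1 j1 J1" and refl1: "reflexive_space TYPE('y1)"
    and E2: "para_hilbert i2 j2 J2"
    and A: "morphism i1 j1 i2 j2 AX AH AY"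
    and surjX: "surj (blinfun_apply AX)" and surjH: "surj (blinfun_apply AH)" and surjY: "surj (blinfun_apply AY)"
begin

lemmas compat1 = ph_compat[OF E1] and Jinj1 = ph_inj[OF E1] and Jsurj1 = ph_surj[OF E1]
  and idense1 = ph_idense[OF E1] and jdense1 = ph_jdense[OF E1]
  and iinj1 = ph_iinj[OF E1] and jinj1 = ph_jinj[OF E1] and Jbnd1 = ph_bnd[OF E1]
  and compat2 = ph_compat[OF E2] and Jinj2 = ph_inj[OF E2] and Jsurj2 = ph_surj[OF E2]
  and idense2 = ph_idense[OF E2] and jdense2 = ph_jdense[OF E2]

lemma morX: "i2 (AX u) = AH (i1 u)"
proof -
  have "i2 o\<^sub>L AX = AH o\<^sub>L i1" using A unfolding morphism_def by blast
  hence "(i2 o\<^sub>L AX) u = (AH o\<^sub>L i1) u" by simp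
  thus ?thesis by simp
qed
lemma morY: "j2 (AH v) = AY (j1 v)"
proof -
  have "j2 o\<^sub>L AH = AY o\<^sub>L j1" using A unfolding morphism_def by blast
  hence "(j2 o\<^sub>L AH) v = (AY o\<^sub>L j1) v" by simp
  thus ?thesis by simp
qed

lemma J1bij: "bij (blinfun_apply J1)"
proof (rule bijI)
  show "inj (blinfun_apply J1)"
  proof (rule injI)
    fix u u' assume "J1 u = J1 u'"
    hence "J1 (u - u') w = 0" for w by (simp add: blinfun.diff_right blinfun.diff_left)
    hence "u - u' = 0" by (rule Jinj1)
    thus "u = u'" by simp
  qed
  show "surj (blinfun_apply J1)" unfolding surj_def using Jsurj1 by metis
qed

definition Jinv :: "('y1 \<Rightarrow>\<^sub>L real) \<Rightarrow>\<^sub>L 'x1" where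
  "Jinv = (SOME g :: ('y1 \<Rightarrow>\<^sub>L real) \<Rightarrow>\<^sub>L 'x1. (\<forall>x. blinfun_apply g (J1 x) = x) \<and> (\<forall>y. J1 (blinfun_apply g y) = y))"

lemma Jinv: "Jinv (J1 u) = u" "J1 (Jinv \<phi>) = \<phi>"
  using someI_ex[OF bij_blinfun_inv[OF J1bij]] unfolding Jinv_def by blast+

abbreviation K1 where "K1 \<equiv> K_map J1"

lemma K1_surj: "\<exists>w. K1 w = f"
proof -
  obtain w where w: "\<And>\<phi>. (f o\<^sub>L Jinv) \<phi> = \<phi> w"
    using refl1 unfolding reflexive_space_def by blast
  have "K1 w = f"
  proof (rule blinfun_eqI)
    fix u
    have "K1 w u = J1 u w" by (simp add: K_map_apply)
    also have "\<dots> = (f o\<^sub>L Jinv) (J1 u)" using w by simp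
    also have "\<dots> = f u" by (simp add: Jinv)
    finally show "K1 w u = f u" .
  qed
  thus ?thesis by blast
qed

lemma Y1_sep: "(\<And>u. J1 u w = 0) \<Longrightarrow> w = 0"
proof (rule hahn_banach_sep)
  fix \<phi> :: "'y1 \<Rightarrow>\<^sub>L real" assume h: "\<And>u. J1 u w = 0"
  obtain u where "J1 u = \<phi>" using Jsurj1 by blast
  thus "\<phi> w = 0" using h by blast
qed

lemma AX_right: "\<exists>u. AX u = g" using surjX by (simp add: surj_def) (metis)
lemma AY_right: "\<exists>w. AY w = g" using surjY by (simp add: surj_def) (metis)
lemma AH_right: "\<exists>v. AH v = g" using surjH by (simp add: surj_def) (metis)

lemma comp_AY_inj: "\<mu> o\<^sub>L AY = 0 \<Longrightarrow> \<mu> = 0"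
proof (rule blinfun_eqI)
  fix y assume h: "\<mu> o\<^sub>L AY = 0"
  obtain w where "AY w = y" using AY_right by blast
  hence "\<mu> y = (\<mu> o\<^sub>L AY) w" by simp
  thus "\<mu> y = blinfun_apply 0 y" using h by simp
qed
lemma comp_AX_inj: "\<nu> o\<^sub>L AX = 0 \<Longrightarrow> \<nu> = 0"
proof (rule blinfun_eqI)
  fix y assume h: "\<nu> o\<^sub>L AX = 0"
  obtain w where "AX w = y" using AX_right by blast
  hence "\<nu> y = (\<nu> o\<^sub>L AX) w" by simp
  thus "\<nu> y = blinfun_apply 0 y" using h by simp
qed

end

context setting begin

definition Smap :: "'x1 \<times> ('y2 \<Rightarrow>\<^sub>L real) \<Rightarrow> ('y1 \<Rightarrow>\<^sub>L real) \<times> 'x2" where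
  "Smap = (\<lambda>p. (J1 (fst p) + (snd p o\<^sub>L AY), AX (fst p)))"
definition Tmap :: "'y1 \<times> ('x2 \<Rightarrow>\<^sub>L real) \<Rightarrow> ('x1 \<Rightarrow>\<^sub>L real) \<times> 'y2" where
  "Tmap = (\<lambda>p. (K_map J1 (fst p) + (snd p o\<^sub>L AX), AY (fst p)))"

lemma Smap_bl: "bounded_linear Smap"
  unfolding Smap_def
  by (intro bounded_linear_Pair bounded_linear_add bounded_linear_compose[OF blinfun.bounded_linear_right]
      bounded_linear_fst bounded_linear_snd bounded_linear_compose[OF bounded_bilinear.bounded_linear_left[OF bounded_bilinear_blinfun_compose]])

lemma Tmap_bl: "bounded_linear Tmap"
  unfolding Tmap_def
  by (intro bounded_linear_Pair bounded_linear_add bounded_linear_compose[OF blinfun.bounded_linear_right]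
      bounded_linear_compose[OF K_map_bl]
      bounded_linear_fst bounded_linear_snd bounded_linear_compose[OF bounded_bilinear.bounded_linear_left[OF bounded_bilinear_blinfun_compose]])

lemma bij_cont_inv:
  fixes f :: "'a::banach \<Rightarrow> 'b::banach"
  shows "bounded_linear f \<Longrightarrow> cont_invertible f \<longleftrightarrow> bij f"
  unfolding cont_invertible_def
  using bounded_inverse by (metis bij_betw_def inj_on_inverseI surjI)

lemma inj_from_kernel:
  assumes "bounded_linear f" "\<And>x. f x = 0 \<Longrightarrow> x = 0"
  shows "inj f"
proof (rule injI)
  interpret f: bounded_linear f by fact
  fix x y assume "f x = f y"
  hence "f (x - y) = 0" by (simp add: f.diff)
  thus "x = y" using assms(2) by fastforce
qed

end

locale pinv = setting +
  fixes BX and BH and BY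
  assumes P: "is_pseudoinverse i1 j1 i2 j2 AX AH AY BX BH BY"
begin

lemma comp3: "(F o\<^sub>L G o\<^sub>L F) = F \<Longrightarrow> blinfun_apply F (blinfun_apply G (blinfun_apply F x)) = blinfun_apply F x"
  by (metis blinfun_apply_blinfun_compose)

lemma AXBX: "AX (BX g) = g"
proof -
  obtain u where "AX u = g" using AX_right by blast
  moreover have "AX o\<^sub>L BX o\<^sub>L AX = AX" using P unfolding is_pseudoinverse_def by blast
  ultimately show ?thesis using comp3 by metis
qed
lemma AHBH: "AH (BH g) = g"
proof -
  obtain u where "AH u = g" using AH_right by blast
  moreover have "AH o\<^sub>L BH o\<^sub>L AH = AH" using P unfolding is_pseudoinverse_def by blast
  ultimately show ?thesis using comp3 by metis
qed
lemma AYBY: "AY (BY g) = g"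
proof -
  obtain u where "AY u = g" using AY_right by blast
  moreover have "AY o\<^sub>L BY o\<^sub>L AY = AY" using P unfolding is_pseudoinverse_def by blast
  ultimately show ?thesis using comp3 by metis
qed

lemma morBX: "i1 (BX g) = BH (i2 g)"
proof -
  have "i1 o\<^sub>L BX = BH o\<^sub>L i2" using P unfolding is_pseudoinverse_def morphism_def by blast
  hence "(i1 o\<^sub>L BX) g = (BH o\<^sub>L i2) g" by simp
  thus ?thesis by simp
qed
lemma morBY: "j1 (BH h) = BY (j2 h)"
proof -
  have "j1 o\<^sub>L BH = BY o\<^sub>L j2" using P unfolding is_pseudoinverse_def morphism_def by blast
  hence "(j1 o\<^sub>L BH) h = (BY o\<^sub>L j2) h" by simp
  thus ?thesis by simp
qed
lemma saBA: "inner (BH (AH x)) y = inner x (BH (AH y))"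
proof -
  have "self_adjoint_op (BH o\<^sub>L AH)" using P unfolding is_pseudoinverse_def by blast
  thus ?thesis unfolding self_adjoint_op_def by simp
qed

lemma Adj: "J1 (BX (AX u)) w = J1 u (BY (AY w))"
proof -
  have "J1 (BX (AX u)) = (J1 u o\<^sub>L BY o\<^sub>L AY)"
  proof (rule blinfun_dense_eq[OF jdense1])
    fix w assume "w \<in> range j1"
    then obtain v where v: "w = j1 v" by blast
    have "J1 (BX (AX u)) (j1 v) = inner (i1 (BX (AX u))) v" by (rule compat1)
    also have "\<dots> = inner (BH (AH (i1 u))) v" by (simp add: morBX morX)
    also have "\<dots> = inner (i1 u) (BH (AH v))" by (rule saBA)
    also have "\<dots> = J1 u (j1 (BH (AH v)))" by (simp add: compat1)
    also have "\<dots> = J1 u (BY (AY (j1 v)))" by (simp add: morBY morY)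
    finally show "J1 (BX (AX u)) w = (J1 u o\<^sub>L BY o\<^sub>L AY) w" using v by simp
  qed
  thus ?thesis by (metis blinfun_apply_blinfun_compose)
qed

definition PXb where "PXb = id_blinfun - (BX o\<^sub>L AX)"
definition PYb where "PYb = id_blinfun - (BY o\<^sub>L AY)"
definition PHb where "PHb = id_blinfun - (BH o\<^sub>L AH)"

lemma PX: "PXb u = u - BX (AX u)" unfolding PXb_def by (simp add: minus_blinfun.rep_eq)
lemma PY: "PYb w = w - BY (AY w)" unfolding PYb_def by (simp add: minus_blinfun.rep_eq)
lemma PH: "PHb v = v - BH (AH v)" unfolding PHb_def by (simp add: minus_blinfun.rep_eq)

lemma AXPX: "AX (PXb u) = 0" by (simp add: PX blinfun.diff_right AXBX)
lemma AYPY: "AY (PYb w) = 0" by (simp add: PY blinfun.diff_right AYBY)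
lemma AHPH: "AH (PHb w) = 0" by (simp add: PH blinfun.diff_right AHBH)
lemma PXPX: "PXb (PXb u) = PXb u" by (metis AXPX PX blinfun.zero_right diff_zero)
lemma PYPY: "PYb (PYb u) = PYb u" by (metis AYPY PY blinfun.zero_right diff_zero)
lemma PYBY: "PYb (BY g) = 0" by (simp add: PY AYBY)
lemma PX_ker: "AX u = 0 \<Longrightarrow> PXb u = u" by (simp add: PX)
lemma PY_ker: "AY u = 0 \<Longrightarrow> PYb u = u" by (simp add: PY)
lemma PH_ker: "AH u = 0 \<Longrightarrow> PHb u = u" by (simp add: PH)

lemma Adj': "J1 (PXb u) w = J1 u (PYb w)"
  by (simp add: PX PY blinfun.diff_left blinfun.diff_right Adj)

lemma ker_J: "AX u = 0 \<Longrightarrow> J1 u w = J1 u (PYb w)"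
  using Adj'[of u w] by (simp add: PX_ker)

lemma K1_zero: "K1 0 = 0" by (rule blinfun_eqI) (simp add: K_map_apply)

lemma Smap_surj_pt: "\<exists>p. Smap p = (f, g)"
proof -
  define u1 where "u1 = Jinv ((f - J1 (BX g)) o\<^sub>L PYb)"
  define u where "u = BX g + PXb u1"
  define \<mu> where "\<mu> = (f - J1 u) o\<^sub>L BY"
  have Ju1: "J1 u1 = (f - J1 (BX g)) o\<^sub>L PYb" unfolding u1_def by (rule Jinv)
  have "AX u = g" unfolding u_def by (simp add: blinfun.add_right AXBX AXPX)
  moreover have "J1 u + (\<mu> o\<^sub>L AY) = f"
  proof (rule blinfun_eqI)
    fix w
    have "J1 u (PYb w) = f (PYb w)"
    proof -
      have "J1 u (PYb w) = J1 (BX g) (PYb w) + J1 (PXb u1) (PYb w)"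
        unfolding u_def by (simp add: blinfun.add_left blinfun.add_right plus_blinfun.rep_eq)
      also have "J1 (PXb u1) (PYb w) = J1 u1 (PYb (PYb w))" by (rule Adj')
      also have "\<dots> = f (PYb w) - J1 (BX g) (PYb w)" using Ju1 by (simp add: PYPY minus_blinfun.rep_eq)
      finally show ?thesis by simp
    qed
    hence "(J1 u + (\<mu> o\<^sub>L AY)) w = f (PYb w) + f (BY (AY w))"
      unfolding \<mu>_def by (simp add: plus_blinfun.rep_eq minus_blinfun.rep_eq PY blinfun.diff_right)
    also have "\<dots> = f w" by (simp add: PY blinfun.diff_right)
    finally show "(J1 u + (\<mu> o\<^sub>L AY)) w = f w" .
  qed
  ultimately show "\<exists>p. Smap p = (f, g)" unfolding Smap_def by (intro exI[of _ "(u, \<mu>)"]) simp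
qed

lemma Smap_bij: "bij Smap"
proof (rule bijI)
  show "inj Smap"
  proof (rule inj_from_kernel[OF Smap_bl])
    fix p assume h: "Smap p = 0"
    obtain u \<mu> where p: "p = (u, \<mu>)" by (cases p)
    have AXu: "AX u = 0" and e: "J1 u + (\<mu> o\<^sub>L AY) = 0" using h unfolding Smap_def p by (simp_all add: zero_prod_def)
    have "J1 u w = 0" for w
    proof -
      have "J1 u w = J1 u (PYb w)" by (rule ker_J[OF AXu])
      also have "\<dots> = (J1 u + (\<mu> o\<^sub>L AY)) (PYb w)" by (simp add: plus_blinfun.rep_eq AYPY)
      finally show ?thesis using e by simp
    qed
    hence u0: "u = 0" by (rule Jinj1)
    hence "\<mu> o\<^sub>L AY = 0" using e by simp
    hence "\<mu> = 0" by (rule comp_AY_inj)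
    thus "p = 0" using u0 p by (simp add: zero_prod_def)
  qed
  show "surj Smap" unfolding surj_def by (metis Smap_surj_pt prod.collapse)
qed

lemma Tmap_surj_pt: "\<exists>p. Tmap p = (f, g)"
proof -
  obtain z where Kz: "K1 z = (f - K1 (BY g)) o\<^sub>L PXb" using K1_surj by blast
  define w where "w = BY g + PYb z"
  define \<nu> where "\<nu> = (f - K1 w) o\<^sub>L BX"
  have "AY w = g" unfolding w_def by (simp add: blinfun.add_right AYBY AYPY)
  moreover have "K1 w + (\<nu> o\<^sub>L AX) = f"
  proof (rule blinfun_eqI)
    fix u
    have a: "J1 (PXb u) (BY g) = 0" by (simp add: Adj' PYBY)
    have "J1 (PXb u) w = f (PXb u)"
    proof -
      have "J1 (PXb u) w = J1 (PXb u) (BY g) + J1 (PXb u) (PYb z)"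
        unfolding w_def by (simp add: blinfun.add_right)
      also have "J1 (PXb u) (PYb z) = J1 (PXb (PXb u)) z" by (rule Adj'[symmetric])
      also have "\<dots> = K1 z (PXb u)" by (simp add: PXPX K_map_apply)
      also have "\<dots> = f (PXb u) - J1 (PXb u) (BY g)" using Kz by (simp add: PXPX minus_blinfun.rep_eq K_map_apply)
      finally show ?thesis using a by simp
    qed
    hence "(K1 w + (\<nu> o\<^sub>L AX)) u = f (PXb u) + f (BX (AX u))"
      unfolding \<nu>_def by (simp add: plus_blinfun.rep_eq minus_blinfun.rep_eq K_map_apply PX blinfun.diff_left blinfun.diff_right)
    also have "\<dots> = f u" by (simp add: PX blinfun.diff_right)
    finally show "(K1 w + (\<nu> o\<^sub>L AX)) u = f u" .
  qed
  ultimately show "\<exists>p. Tmap p = (f, g)" unfolding Tmap_def by (intro exI[of _ "(w, \<nu>)"]) simp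
qed

lemma Tmap_bij: "bij Tmap"
proof (rule bijI)
  show "inj Tmap"
  proof (rule inj_from_kernel[OF Tmap_bl])
    fix p assume h: "Tmap p = 0"
    obtain w \<nu> where p: "p = (w, \<nu>)" by (cases p)
    have AYw: "AY w = 0" and e: "K1 w + (\<nu> o\<^sub>L AX) = 0" using h unfolding Tmap_def p by (simp_all add: zero_prod_def)
    have "J1 u w = 0" for u
    proof -
      have "J1 u w = J1 (PXb u) w + J1 (BX (AX u)) w" by (simp add: PX blinfun.diff_right minus_blinfun.rep_eq)
      also have "J1 (BX (AX u)) w = 0" by (simp add: Adj AYw)
      also have "J1 (PXb u) w = (K1 w + (\<nu> o\<^sub>L AX)) (PXb u)" by (simp add: K_map_apply plus_blinfun.rep_eq AXPX)
      finally show ?thesis using e by simp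
    qed
    hence w0: "w = 0" by (rule Y1_sep)
    hence "\<nu> o\<^sub>L AX = 0" using e by (simp add: K1_zero)
    hence "\<nu> = 0" by (rule comp_AX_inj)
    thus "p = 0" using w0 p by (simp add: zero_prod_def)
  qed
  show "surj Tmap" unfolding surj_def by (metis Tmap_surj_pt prod.collapse)
qed

end

lemma bl_on_subset: "bounded_linear_on UNIV f \<Longrightarrow> bounded_linear_on S f"
  unfolding bounded_linear_on_def by blast

lemma blinfun_bl_on: "bounded_linear_on S (blinfun_apply f)"
  by (rule bl_on_subset, rule bl_on_UNIV, rule blinfun.bounded_linear_right)

lemma subspace_ker: "subspace {x. blinfun_apply f x = 0}"
  unfolding subspace_def by (simp add: blinfun.add_right blinfun.scaleR_right)

lemma closed_ker: "closed {x. blinfun_apply f x = 0}"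
  by (intro closed_Collect_eq continuous_intros)

lemma dense_ker:
  fixes L :: "'p::real_normed_vector \<Rightarrow>\<^sub>L 'p" and e :: "'q::real_normed_vector \<Rightarrow>\<^sub>L 'p"
  assumes "closure (range e) = UNIV" "\<And>h. h \<in> N \<Longrightarrow> L h = h" "\<And>u. L (e u) \<in> e ` M"
  shows "N \<subseteq> closure (e ` M)"
proof
  fix h assume h: "h \<in> N"
  have "L ` closure (range e) \<subseteq> closure (e ` M)"
    by (rule image_closure_subset) (auto intro!: continuous_intros assms(3) intro: subsetD[OF closure_subset])
  hence "L h \<in> closure (e ` M)" using assms(1) by auto
  thus "h \<in> closure (e ` M)" using assms(2)[OF h] by simp
qed

context pinv begin

lemma PH_i: "PHb (i1 u) = i1 (PXb u)"
  by (simp add: PH PX blinfun.diff_right morBX morX)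

lemma PY_j: "PYb (j1 h) = j1 (PHb h)"
  by (simp add: PH PY blinfun.diff_right morBY morY)

lemma E0: "para_hilbert_on {u. AX u = 0} {v. AH v = 0} {w. AY w = 0}
          (blinfun_apply i1) (blinfun_apply j1) (\<lambda>u w. J1 u w)"
  unfolding para_hilbert_on_def
proof (intro conjI)
  show "subspace {u. AX u = 0}" "subspace {v. AH v = 0}" "subspace {w. AY w = 0}" by (rule subspace_ker)+
  show "closed {u. AX u = 0}" "closed {v. AH v = 0}" "closed {w. AY w = 0}" by (rule closed_ker)+
  show "blinfun_apply i1 ` {u. AX u = 0} \<subseteq> {v. AH v = 0}" by (auto simp: morX[symmetric])
  show "blinfun_apply j1 ` {v. AH v = 0} \<subseteq> {w. AY w = 0}" by (auto simp: morY[symmetric])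
  show "bounded_linear_on {u. AX u = 0} (blinfun_apply i1)" "bounded_linear_on {v. AH v = 0} (blinfun_apply j1)"
    by (rule blinfun_bl_on)+
  show "inj_on (blinfun_apply i1) {u. AX u = 0}" using iinj1 by (rule inj_on_subset) simp
  show "inj_on (blinfun_apply j1) {v. AH v = 0}" using jinj1 by (rule inj_on_subset) simp
  show "{v. AH v = 0} \<subseteq> closure (blinfun_apply i1 ` {u. AX u = 0})"
    by (rule dense_ker[OF idense1, of _ PHb]) (auto simp: PH_ker PH_i AXPX)
  show "{w. AY w = 0} \<subseteq> closure (blinfun_apply j1 ` {v. AH v = 0})"
    by (rule dense_ker[OF jdense1, of _ PYb]) (auto simp: PY_ker PY_j AHPH)
  show "\<forall>u\<in>{u. AX u = 0}. bounded_linear_on {w. AY w = 0} (blinfun_apply (blinfun_apply J1 u))"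
    by (auto intro: blinfun_bl_on)
  show "\<forall>w\<in>{w. AY w = 0}. \<forall>u\<in>{u. AX u = 0}. \<forall>u'\<in>{u. AX u = 0}. J1 (u + u') w = J1 u w + J1 u' w"
    by (simp add: blinfun.add_right plus_blinfun.rep_eq)
  show "\<forall>w\<in>{w. AY w = 0}. \<forall>c. \<forall>u\<in>{u. AX u = 0}. J1 (c *\<^sub>R u) w = c * J1 u w"
    by (simp add: blinfun.scaleR_right scaleR_blinfun.rep_eq)
  show "\<exists>C. \<forall>u\<in>{u. AX u = 0}. \<forall>w\<in>{w. AY w = 0}. \<bar>J1 u w\<bar> \<le> C * norm u * norm w"
  proof (intro exI ballI)
    fix u w
    have "\<bar>J1 u w\<bar> \<le> norm (J1 u) * norm w" using norm_blinfun[of "J1 u" w] by simp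
    also have "\<dots> \<le> norm J1 * norm u * norm w" by (intro mult_right_mono norm_blinfun) simp
    finally show "\<bar>J1 u w\<bar> \<le> norm J1 * norm u * norm w" .
  qed
  show "\<forall>u\<in>{u. AX u = 0}. (\<forall>w\<in>{w. AY w = 0}. J1 u w = 0) \<longrightarrow> u = 0"
  proof (intro ballI impI)
    fix u assume u: "u \<in> {u. AX u = 0}" and h: "\<forall>w\<in>{w. AY w = 0}. J1 u w = 0"
    have "J1 u w = 0" for w using ker_J[of u w] u h AYPY by simp
    thus "u = 0" by (rule Jinj1)
  qed
  show "\<forall>\<phi>. bounded_linear_on {w. AY w = 0} \<phi> \<longrightarrow> (\<exists>u\<in>{u. AX u = 0}. \<forall>w\<in>{w. AY w = 0}. J1 u w = \<phi> w)"
  proof (intro allI impI)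
    fix \<phi> :: "_ \<Rightarrow> real" assume bl: "bounded_linear_on {w. AY w = 0} \<phi>"
    then obtain C where C: "\<And>x. AY x = 0 \<Longrightarrow> norm (\<phi> x) \<le> C * norm x"
      unfolding bounded_linear_on_def by auto
    have add: "\<phi> (x + y) = \<phi> x + \<phi> y" if "AY x = 0" "AY y = 0" for x y
      using bl that unfolding bounded_linear_on_def by auto
    have sc: "\<phi> (c *\<^sub>R x) = c * \<phi> x" if "AY x = 0" for c x
      using bl that unfolding bounded_linear_on_def by auto
    define \<psi> where "\<psi> w = \<phi> (PYb w)" for w
    have "bounded_linear \<psi>"
    proof (rule bounded_linear_intro[of _ "max C 0 * norm PYb"])
      show "\<psi> (x + y) = \<psi> x + \<psi> y" for x y unfolding \<psi>_def by (simp add: blinfun.add_right add AYPY)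
      show "\<psi> (c *\<^sub>R x) = c *\<^sub>R \<psi> x" for c x unfolding \<psi>_def by (simp add: blinfun.scaleR_right sc AYPY)
      show "norm (\<psi> x) \<le> norm x * (max C 0 * norm PYb)" for x
      proof -
        have "norm (\<psi> x) \<le> C * norm (PYb x)" unfolding \<psi>_def by (rule C[OF AYPY])
        also have "\<dots> \<le> max C 0 * norm (PYb x)" by (intro mult_right_mono) auto
        also have "\<dots> \<le> max C 0 * (norm PYb * norm x)" by (intro mult_left_mono norm_blinfun) auto
        finally show ?thesis by (simp add: ac_simps)
      qed
    qed
    define u1 where "u1 = Jinv (Blinfun \<psi>)"
    have Ju1: "J1 u1 w = \<psi> w" for w unfolding u1_def Jinv by (simp add: bounded_linear_Blinfun_apply[OF \<open>bounded_linear \<psi>\<close>])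
    show "\<exists>u\<in>{u. AX u = 0}. \<forall>w\<in>{w. AY w = 0}. J1 u w = \<phi> w"
    proof (intro bexI[of _ "PXb u1"] ballI)
      show "PXb u1 \<in> {u. AX u = 0}" by (simp add: AXPX)
      fix w assume w: "w \<in> {w. AY w = 0}"
      have "J1 (PXb u1) w = \<psi> (PYb w)" by (simp add: Adj' Ju1)
      also have "\<dots> = \<phi> w" unfolding \<psi>_def using w by (simp add: PY_ker)
      finally show "J1 (PXb u1) w = \<phi> w" .
    qed
  qed
  show "\<exists>C. \<forall>u\<in>{u. AX u = 0}. \<forall>M\<ge>0. (\<forall>w\<in>{w. AY w = 0}. \<bar>J1 u w\<bar> \<le> M * norm w) \<longrightarrow> norm u \<le> C * M"
  proof -
    obtain C0 where C0: "\<And>u M. M \<ge> 0 \<Longrightarrow> (\<forall>w. \<bar>J1 u w\<bar> \<le> M * norm w) \<Longrightarrow> norm u \<le> C0 * M"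
      using Jbnd1 by blast
    show ?thesis
    proof (intro exI[of _ "C0 * norm PYb"] ballI allI impI)
      fix u M assume u: "u \<in> {u. AX u = 0}" and M: "M \<ge> 0" and h: "\<forall>w\<in>{w. AY w = 0}. \<bar>J1 u w\<bar> \<le> M * norm w"
      have "\<bar>J1 u w\<bar> \<le> (M * norm PYb) * norm w" for w
      proof -
        have "\<bar>J1 u w\<bar> = \<bar>J1 u (PYb w)\<bar>" using ker_J[of u w] u by simp
        also have "\<dots> \<le> M * norm (PYb w)" using h AYPY by simp
        also have "\<dots> \<le> M * (norm PYb * norm w)" by (intro mult_left_mono norm_blinfun M)
        finally show ?thesis by (simp add: ac_simps)
      qed
      hence "norm u \<le> C0 * (M * norm PYb)" using M by (intro C0) auto
      thus "norm u \<le> C0 * norm PYb * M" by (simp add: ac_simps)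
    qed
  qed
  show "\<forall>u\<in>{u. AX u = 0}. \<forall>v\<in>{v. AH v = 0}. i1 u \<bullet> v = J1 u (j1 v)" by (simp add: compat1)
qed

end

lemma norm_le_from_inner:
  fixes v x :: "'a::real_inner"
  assumes "inner v v \<le> norm v * norm x"
  shows "norm v \<le> norm x"
proof (cases "v = 0")
  case True thus ?thesis by simp
next
  case False
  hence "norm v * norm v \<le> norm v * norm x" using assms by (simp add: norm_eq_sqrt_inner power2_eq_square[symmetric])
  thus ?thesis using False by simp
qed

context setting begin

lemma CL:
  fixes BX :: "'x2 \<Rightarrow>\<^sub>L 'x1" and BY :: "'y2 \<Rightarrow>\<^sub>L 'y1"
  assumes i: "\<And>g. AX (BX g) = g" and ii: "\<And>y. AY (BY y) = y"
    and iii: "\<And>g w. AY w = 0 \<Longrightarrow> J1 (BX g) w = 0"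
    and iv: "\<And>y u. AX u = 0 \<Longrightarrow> J1 u (BY y) = 0"
  shows "\<exists>BH. is_pseudoinverse i1 j1 i2 j2 AX AH AY BX BH BY"
proof -
  have ortho: "inner (i1 (BX g)) h = 0" if "AH h = 0" for g h
  proof -
    have "inner (i1 (BX g)) h = J1 (BX g) (j1 h)" by (simp add: compat1)
    also have "\<dots> = 0" using iii[of "j1 h" g] that by (simp add: morY[symmetric])
    finally show ?thesis .
  qed
  obtain C where C: "\<And>y. \<exists>x. AH x = y \<and> norm x \<le> C * norm y"
    using open_mapping[of "blinfun_apply AH"] surjH blinfun.bounded_linear_right by blast
  have bnd: "norm (blinfun_apply (i1 o\<^sub>L BX) g) \<le> C * norm (i2 g)" for g
  proof -
    define v where "v = i1 (BX g)"
    have Av: "AH v = i2 g" unfolding v_def by (simp add: morX[symmetric] i)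
    obtain x where x: "AH x = i2 g" "norm x \<le> C * norm (i2 g)" using C by blast
    have "inner v (v - x) = 0" unfolding v_def by (rule ortho) (simp add: blinfun.diff_right Av[unfolded v_def] x)
    hence "inner v v = inner v x" by (simp add: inner_diff_right)
    also have "\<dots> \<le> norm v * norm x" by (rule Cauchy_Schwarz_ineq2[THEN order_trans[OF abs_ge_self]])
    finally have "norm v \<le> norm x" by (rule norm_le_from_inner)
    thus ?thesis using x unfolding v_def by simp
  qed
  obtain BH :: "'h2 \<Rightarrow>\<^sub>L 'h1" where BH: "\<And>g. BH (i2 g) = i1 (BX g)"
    using extend_dense[OF blinfun.bounded_linear_right blinfun.bounded_linear_right idense2 bnd] by auto
  have AHBH: "AH (BH v) = v" for v
  proof -
    have "AH o\<^sub>L BH = id_blinfun"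
      by (rule blinfun_dense_eq[OF idense2]) (auto simp: BH morX[symmetric] i)
    hence "(AH o\<^sub>L BH) v = id_blinfun v" by simp
    thus ?thesis by simp
  qed
  have orthoBH: "inner (BH v) h = 0" if "AH h = 0" for v h
  proof (rule dense_eq[OF idense2, of "\<lambda>v. inner (BH v) h" "\<lambda>v. 0"])
    show "continuous_on UNIV (\<lambda>v. BH v \<bullet> h)" by (intro continuous_intros)
    show "continuous_on UNIV (\<lambda>v. 0::real)" by simp
    fix v assume "v \<in> range i2"
    thus "BH v \<bullet> h = 0" using ortho[OF that] BH by auto
  qed
  have morBY: "j1 (BH v) = BY (j2 v)" for v
  proof -
    have "j1 o\<^sub>L BH = BY o\<^sub>L j2"
    proof (rule blinfun_dense_eq[OF idense2])
      fix v assume "v \<in> range i2"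
      then obtain g where v: "v = i2 g" by blast
      define d where "d = j1 (i1 (BX g)) - BY (j2 (i2 g))"
      have Ad: "AY d = 0" unfolding d_def
        by (simp add: blinfun.diff_right ii morY[symmetric] morX[symmetric] i)
      have "J1 u d = 0" for u
      proof -
        define u' where "u' = u - BX (AX u)"
        have Au': "AX u' = 0" unfolding u'_def by (simp add: blinfun.diff_right i)
        have "J1 u' (j1 (i1 (BX g))) = inner (i1 u') (i1 (BX g))" by (rule compat1)
        also have "\<dots> = J1 (BX g) (j1 (i1 u'))" by (simp add: compat1 inner_commute)
        also have "\<dots> = 0" by (rule iii) (simp add: morY[symmetric] morX[symmetric] Au')
        finally have a: "J1 u' d = 0" unfolding d_def using iv[OF Au'] by (simp add: blinfun.diff_right)
        have "J1 u d = J1 u' d + J1 (BX (AX u)) d" unfolding u'_def by (simp add: blinfun.diff_right minus_blinfun.rep_eq)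
        thus ?thesis using a iii[OF Ad] by simp
      qed
      hence "d = 0" by (rule Y1_sep)
      thus "(j1 o\<^sub>L BH) v = (BY o\<^sub>L j2) v" unfolding d_def v by (simp add: BH)
    qed
    hence "(j1 o\<^sub>L BH) v = (BY o\<^sub>L j2) v" by simp
    thus ?thesis by simp
  qed
  have saBA: "inner (BH (AH x)) y = inner x (BH (AH y))" for x y
  proof -
    have k: "AH (z - BH (AH z)) = 0" for z by (simp add: blinfun.diff_right AHBH)
    have "inner (BH (AH x)) y = inner (BH (AH x)) (BH (AH y)) + inner (BH (AH x)) (y - BH (AH y))"
      by (simp add: inner_diff_right)
    also have "inner (BH (AH x)) (y - BH (AH y)) = 0" by (rule orthoBH[OF k])
    also have "inner (BH (AH x)) (BH (AH y)) = inner x (BH (AH y)) - inner (x - BH (AH x)) (BH (AH y))"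
      by (simp add: inner_diff_left)
    also have "inner (x - BH (AH x)) (BH (AH y)) = 0" using orthoBH[OF k[of x]] by (simp add: inner_commute)
    finally show ?thesis by simp
  qed
  have "is_pseudoinverse i1 j1 i2 j2 AX AH AY BX BH BY"
    unfolding is_pseudoinverse_def morphism_def self_adjoint_op_def
    by (intro conjI allI blinfun_eqI) (simp_all add: BH morBY i ii AHBH saBA)
  thus ?thesis by blast
qed

end

context setting begin

lemma Smap_apply: "Smap (u, \<mu>) = (J1 u + (\<mu> o\<^sub>L AY), AX u)" unfolding Smap_def by simp
lemma Tmap_apply: "Tmap (w, \<nu>) = (K1 w + (\<nu> o\<^sub>L AX), AY w)" unfolding Tmap_def by simp

lemma zero_comp: "(0 o\<^sub>L F) = 0" by (rule blinfun_eqI) simp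

lemma S_P:
  assumes "cont_invertible Smap"
  shows "\<exists>BX BH BY. is_pseudoinverse i1 j1 i2 j2 AX AH AY BX BH BY"
proof -
  obtain G where G: "bounded_linear G" "\<And>p. G (Smap p) = p" "\<And>q. Smap (G q) = q"
    using assms unfolding cont_invertible_def by blast
  have SG1: "J1 (fst (G q)) + (snd (G q) o\<^sub>L AY) = fst q" for q
    using arg_cong[OF G(3)[of q], of fst] unfolding Smap_def by simp
  have SG2: "AX (fst (G q)) = snd q" for q
    using arg_cong[OF G(3)[of q], of snd] unfolding Smap_def by simp
  define BXf where "BXf g = fst (G (0, g))" for g
  have blBX: "bounded_linear BXf" unfolding BXf_def
    by (intro bounded_linear_compose[OF bounded_linear_fst] bounded_linear_compose[OF G(1)]
        bounded_linear_Pair bounded_linear_zero bounded_linear_ident)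
  define BX :: "'x2 \<Rightarrow>\<^sub>L 'x1" where "BX = Blinfun BXf"
  have BXa: "BX g = fst (G (0, g))" for g by (simp add: BX_def bounded_linear_Blinfun_apply[OF blBX] BXf_def)
  have i: "AX (BX g) = g" for g using SG2[of "(0, g)"] by (simp add: BXa)
  have iii: "J1 (BX g) w = 0" if "AY w = 0" for g w
  proof -
    have "(J1 (fst (G (0, g))) + (snd (G (0, g)) o\<^sub>L AY)) w = blinfun_apply 0 w" using SG1[of "(0, g)"] by simp
    thus ?thesis using that by (simp add: plus_blinfun.rep_eq BXa)
  qed
  define Mf where "Mf f = snd (G (f, 0))" for f
  have blM: "bounded_linear Mf" unfolding Mf_def
    by (intro bounded_linear_compose[OF bounded_linear_snd] bounded_linear_compose[OF G(1)]
        bounded_linear_Pair bounded_linear_zero bounded_linear_ident)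
  define Mb where "Mb = Blinfun Mf"
  have Ma: "Mb f = Mf f" for f by (simp add: Mb_def bounded_linear_Blinfun_apply[OF blM])
  have M_AY: "Mf (\<psi> o\<^sub>L AY) = \<psi>" for \<psi>
  proof -
    have "Smap (0, \<psi>) = (\<psi> o\<^sub>L AY, 0)" by (simp add: Smap_apply)
    hence "G (\<psi> o\<^sub>L AY, 0) = (0, \<psi>)" using G(2)[of "(0, \<psi>)"] by simp
    thus ?thesis unfolding Mf_def by simp
  qed
  have M_J: "Mf (J1 u) = 0" if "AX u = 0" for u
  proof -
    have "Smap (u, 0) = (J1 u, 0)" using that by (simp add: Smap_apply zero_comp)
    hence "G (J1 u, 0) = (u, 0)" using G(2)[of "(u, 0)"] by simp
    thus ?thesis unfolding Mf_def by simp
  qed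
  have ex: "\<exists>w. \<forall>\<phi> :: ('y1 \<Rightarrow>\<^sub>L real). blinfun_apply \<phi> w = Mf \<phi> y" for y
  proof -
    have bl: "bounded_linear (\<lambda>f. blinfun_apply (Mf f) y)"
      by (rule bounded_linear_compose[OF blinfun.bounded_linear_left blM])
    obtain w where "\<And>\<phi>. blinfun_apply (Blinfun (\<lambda>f. blinfun_apply (Mf f) y)) \<phi> = \<phi> w"
      using refl1 unfolding reflexive_space_def by blast
    thus ?thesis by (auto simp: bounded_linear_Blinfun_apply[OF bl])
  qed
  define BYf where "BYf y = (SOME w. \<forall>\<phi> :: ('y1 \<Rightarrow>\<^sub>L real). blinfun_apply \<phi> w = Mf \<phi> y)" for y
  have BYf: "blinfun_apply \<phi> (BYf y) = Mf \<phi> y" for \<phi> :: "'y1 \<Rightarrow>\<^sub>L real" and y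
    unfolding BYf_def using someI_ex[OF ex[of y]] by blast
  have blBY: "bounded_linear BYf"
  proof (rule bounded_linear_intro[of _ "norm Mb"])
    show "BYf (a + b) = BYf a + BYf b" for a b
    proof -
      have "\<phi> (BYf (a + b) - (BYf a + BYf b)) = 0" for \<phi> :: "'y1 \<Rightarrow>\<^sub>L real"
        by (simp add: blinfun.diff_right blinfun.add_right BYf)
      hence "BYf (a + b) - (BYf a + BYf b) = 0" by (rule hahn_banach_sep)
      thus ?thesis by simp
    qed
    show "BYf (c *\<^sub>R a) = c *\<^sub>R BYf a" for c a
    proof -
      have "\<phi> (BYf (c *\<^sub>R a) - c *\<^sub>R BYf a) = 0" for \<phi> :: "'y1 \<Rightarrow>\<^sub>L real"
        by (simp add: blinfun.diff_right blinfun.scaleR_right BYf)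
      hence "BYf (c *\<^sub>R a) - c *\<^sub>R BYf a = 0" by (rule hahn_banach_sep)
      thus ?thesis by simp
    qed
    show "norm (BYf y) \<le> norm y * norm Mb" for y
    proof -
      obtain \<phi> :: "'y1 \<Rightarrow>\<^sub>L real" where \<phi>: "norm \<phi> \<le> 1" "\<phi> (BYf y) = norm (BYf y)"
        using hahn_banach_norming by blast
      have "norm (BYf y) = Mf \<phi> y" using \<phi>(2) BYf by simp
      also have "\<dots> \<le> norm (Mf \<phi> y)" by simp
      also have "\<dots> \<le> norm (Mf \<phi>) * norm y" by (rule norm_blinfun)
      also have "\<dots> \<le> (norm Mb * norm \<phi>) * norm y" unfolding Ma[symmetric] by (intro mult_right_mono norm_blinfun) simp
      also have "\<dots> \<le> norm Mb * norm y" using \<phi>(1) by (simp add: mult_left_le mult_right_le_one_le mult_right_mono)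
      finally show ?thesis by (simp add: ac_simps)
    qed
  qed
  define BY :: "'y2 \<Rightarrow>\<^sub>L 'y1" where "BY = Blinfun BYf"
  have BYa: "BY y = BYf y" for y by (simp add: BY_def bounded_linear_Blinfun_apply[OF blBY])
  have ii: "AY (BY y) = y" for y
  proof -
    have "\<psi> (AY (BY y) - y) = 0" for \<psi> :: "'y2 \<Rightarrow>\<^sub>L real"
    proof -
      have "\<psi> (AY (BY y)) = (\<psi> o\<^sub>L AY) (BYf y)" by (simp add: BYa)
      also have "\<dots> = \<psi> y" by (simp add: BYf M_AY)
      finally show ?thesis by (simp add: blinfun.diff_right)
    qed
    hence "AY (BY y) - y = 0" by (rule hahn_banach_sep)
    thus ?thesis by simp
  qed
  have iv: "J1 u (BY y) = 0" if "AX u = 0" for u y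
    using BYf[of "J1 u" y] M_J[OF that] by (simp add: BYa)
  show ?thesis using CL[OF i ii iii iv] by blast
qed

end

context setting begin

lemma K1z: "K1 0 = 0" by (rule blinfun_eqI) (simp add: K_map_apply)

lemma T_P:
  assumes "cont_invertible Tmap"
  shows "\<exists>BX BH BY. is_pseudoinverse i1 j1 i2 j2 AX AH AY BX BH BY"
proof -
  obtain G where G: "bounded_linear G" "\<And>p. G (Tmap p) = p" "\<And>q. Tmap (G q) = q"
    using assms unfolding cont_invertible_def by blast
  have TG1: "K1 (fst (G q)) + (snd (G q) o\<^sub>L AX) = fst q" for q
    using arg_cong[OF G(3)[of q], of fst] unfolding Tmap_def by simp
  have TG2: "AY (fst (G q)) = snd q" for q
    using arg_cong[OF G(3)[of q], of snd] unfolding Tmap_def by simp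
  define BYf where "BYf y = fst (G (0, y))" for y
  have blBY: "bounded_linear BYf" unfolding BYf_def
    by (intro bounded_linear_compose[OF bounded_linear_fst] bounded_linear_compose[OF G(1)]
        bounded_linear_Pair bounded_linear_zero bounded_linear_ident)
  define BY :: "'y2 \<Rightarrow>\<^sub>L 'y1" where "BY = Blinfun BYf"
  have BYa: "BY y = fst (G (0, y))" for y by (simp add: BY_def bounded_linear_Blinfun_apply[OF blBY] BYf_def)
  have ii: "AY (BY y) = y" for y using TG2[of "(0, y)"] by (simp add: BYa)
  have iv: "J1 u (BY y) = 0" if "AX u = 0" for y u
  proof -
    have "(K1 (fst (G (0, y))) + (snd (G (0, y)) o\<^sub>L AX)) u = blinfun_apply 0 u" using TG1[of "(0, y)"] by simp
    thus ?thesis using that by (simp add: plus_blinfun.rep_eq BYa K_map_apply)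
  qed
  define Nf where "Nf f = snd (G (f, 0))" for f
  have blN: "bounded_linear Nf" unfolding Nf_def
    by (intro bounded_linear_compose[OF bounded_linear_snd] bounded_linear_compose[OF G(1)]
        bounded_linear_Pair bounded_linear_zero bounded_linear_ident)
  define Nb where "Nb = Blinfun Nf"
  have Na: "Nb f = Nf f" for f by (simp add: Nb_def bounded_linear_Blinfun_apply[OF blN])
  define Kb where "Kb = Blinfun K1"
  have Ka: "Kb w = K1 w" for w by (simp add: Kb_def bounded_linear_Blinfun_apply[OF K_map_bl])
  have N_AX: "Nf (\<psi> o\<^sub>L AX) = \<psi>" for \<psi>
  proof -
    have "Tmap (0, \<psi>) = (\<psi> o\<^sub>L AX, 0)" by (simp add: Tmap_apply K1z)
    hence "G (\<psi> o\<^sub>L AX, 0) = (0, \<psi>)" using G(2)[of "(0, \<psi>)"] by simp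
    thus ?thesis unfolding Nf_def by simp
  qed
  have N_K: "Nf (K1 w) = 0" if "AY w = 0" for w
  proof -
    have "Tmap (w, 0) = (K1 w, 0)" using that by (simp add: Tmap_apply zero_comp)
    hence "G (K1 w, 0) = (w, 0)" using G(2)[of "(w, 0)"] by simp
    thus ?thesis unfolding Nf_def by simp
  qed
  have blQw: "bounded_linear (\<lambda>w. blinfun_apply (Nf (K1 w)) g)" for g
    by (rule bounded_linear_compose[OF blinfun.bounded_linear_left bounded_linear_compose[OF blN K_map_bl]])
  define Qf where "Qf g = Blinfun (\<lambda>w. blinfun_apply (Nf (K1 w)) g)" for g
  have Qa: "Qf g w = Nf (K1 w) g" for g w unfolding Qf_def by (simp add: bounded_linear_Blinfun_apply[OF blQw])
  have blQ: "bounded_linear Qf"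
  proof (rule bounded_linear_intro[of _ "norm Nb * norm Kb"])
    show "Qf (a + b) = Qf a + Qf b" for a b
      by (rule blinfun_eqI) (simp add: Qa blinfun.add_right plus_blinfun.rep_eq)
    show "Qf (c *\<^sub>R a) = c *\<^sub>R Qf a" for c a
      by (rule blinfun_eqI) (simp add: Qa blinfun.scaleR_right scaleR_blinfun.rep_eq)
    show "norm (Qf g) \<le> norm g * (norm Nb * norm Kb)" for g
    proof (rule norm_blinfun_bound)
      show "0 \<le> norm g * (norm Nb * norm Kb)" by simp
      fix w
      have "norm (Qf g w) = norm (Nf (K1 w) g)" by (simp add: Qa)
      also have "\<dots> \<le> norm (Nf (K1 w)) * norm g" by (rule norm_blinfun)
      also have "\<dots> \<le> (norm Nb * norm (K1 w)) * norm g" unfolding Na[symmetric] by (intro mult_right_mono norm_blinfun) simp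
      also have "\<dots> \<le> (norm Nb * (norm Kb * norm w)) * norm g" unfolding Ka[symmetric]
        by (intro mult_right_mono mult_left_mono norm_blinfun) simp_all
      finally show "norm (Qf g w) \<le> norm g * (norm Nb * norm Kb) * norm w" by (simp add: ac_simps)
    qed
  qed
  have blBX: "bounded_linear (\<lambda>g. Jinv (Qf g))"
    by (rule bounded_linear_compose[OF blinfun.bounded_linear_right blQ])
  define BX :: "'x2 \<Rightarrow>\<^sub>L 'x1" where "BX = Blinfun (\<lambda>g. Jinv (Qf g))"
  have BXa: "J1 (BX g) w = Nf (K1 w) g" for g w
    by (simp add: BX_def bounded_linear_Blinfun_apply[OF blBX] Jinv Qa)
  have i: "AX (BX g) = g" for g
  proof -
    have "J2 (AX (BX g) - g) w2 = 0" for w2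
    proof -
      define \<psi> where "\<psi> = K_map J2 w2"
      obtain w where w: "K1 w = \<psi> o\<^sub>L AX" using K1_surj by blast
      have "J2 (AX (BX g)) w2 = (\<psi> o\<^sub>L AX) (BX g)" by (simp add: \<psi>_def K_map_apply)
      also have "\<dots> = K1 w (BX g)" by (simp add: w)
      also have "\<dots> = Nf (K1 w) g" by (simp add: K_map_apply BXa)
      also have "\<dots> = J2 g w2" by (simp add: w N_AX \<psi>_def K_map_apply)
      finally show ?thesis by (simp add: blinfun.diff_right minus_blinfun.rep_eq)
    qed
    hence "AX (BX g) - g = 0" by (rule Jinj2)
    thus ?thesis by simp
  qed
  have iii: "J1 (BX g) w = 0" if "AY w = 0" for g w
    by (simp add: BXa N_K[OF that])
  show ?thesis using CL[OF i ii iii iv] by blast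
qed

end

context setting begin

lemma pinv_of: "is_pseudoinverse i1 j1 i2 j2 AX AH AY BX BH BY \<Longrightarrow> pinv i1 j1 J1 i2 j2 J2 AX AH AY BX BH BY"
  by (intro pinv.intro setting_axioms pinv_axioms.intro)

lemma S_iff: "(\<exists>BX BH BY. is_pseudoinverse i1 j1 i2 j2 AX AH AY BX BH BY) \<longleftrightarrow> cont_invertible Smap"
proof
  assume "\<exists>BX BH BY. is_pseudoinverse i1 j1 i2 j2 AX AH AY BX BH BY"
  then obtain BX BH BY where "is_pseudoinverse i1 j1 i2 j2 AX AH AY BX BH BY" by blast
  then interpret pinv i1 j1 J1 i2 j2 J2 AX AH AY BX BH BY by (rule pinv_of)
  show "cont_invertible Smap" using bij_cont_inv[OF Smap_bl] Smap_bij by blast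
qed (rule S_P)

lemma T_iff: "(\<exists>BX BH BY. is_pseudoinverse i1 j1 i2 j2 AX AH AY BX BH BY) \<longleftrightarrow> cont_invertible Tmap"
proof
  assume "\<exists>BX BH BY. is_pseudoinverse i1 j1 i2 j2 AX AH AY BX BH BY"
  then obtain BX BH BY where "is_pseudoinverse i1 j1 i2 j2 AX AH AY BX BH BY" by blast
  then interpret pinv i1 j1 J1 i2 j2 J2 AX AH AY BX BH BY by (rule pinv_of)
  show "cont_invertible Tmap" using bij_cont_inv[OF Tmap_bl] Tmap_bij by blast
qed (rule T_P)

lemma P_E0: "(\<exists>BX BH BY. is_pseudoinverse i1 j1 i2 j2 AX AH AY BX BH BY) \<Longrightarrow>
   para_hilbert_on {u. AX u = 0} {v. AH v = 0} {w. AY w = 0}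
          (blinfun_apply i1) (blinfun_apply j1) (\<lambda>u w. J1 u w)"
proof -
  assume "\<exists>BX BH BY. is_pseudoinverse i1 j1 i2 j2 AX AH AY BX BH BY"
  then obtain BX BH BY where "is_pseudoinverse i1 j1 i2 j2 AX AH AY BX BH BY" by blast
  then interpret pinv i1 j1 J1 i2 j2 J2 AX AH AY BX BH BY by (rule pinv_of)
  show ?thesis by (rule E0)
qed

end

theorem theorem2p17:
  fixes i1 :: "'x1::banach \<Rightarrow>\<^sub>L 'h1::{real_inner,complete_space}"
    and j1 :: "'h1 \<Rightarrow>\<^sub>L 'y1::banach"
    and J1 :: "'x1 \<Rightarrow>\<^sub>L ('y1 \<Rightarrow>\<^sub>L real)"
    and i2 :: "'x2::banach \<Rightarrow>\<^sub>L 'h2::{real_inner,complete_space}"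
    and j2 :: "'h2 \<Rightarrow>\<^sub>L 'y2::banach"
    and J2 :: "'x2 \<Rightarrow>\<^sub>L ('y2 \<Rightarrow>\<^sub>L real)"
    and AX :: "'x1 \<Rightarrow>\<^sub>L 'x2" and AH :: "'h1 \<Rightarrow>\<^sub>L 'h2" and AY :: "'y1 \<Rightarrow>\<^sub>L 'y2"
  assumes E1: "para_hilbert i1 j1 J1" and refl1: "reflexive_space TYPE('y1)"
    and E2: "para_hilbert i2 j2 J2" and refl2: "reflexive_space TYPE('y2)"
    and A: "morphism i1 j1 i2 j2 AX AH AY"
    and surj: "surj (blinfun_apply AX)" "surj (blinfun_apply AH)" "surj (blinfun_apply AY)"
  shows
    "((\<exists>BX BH BY. is_pseudoinverse i1 j1 i2 j2 AX AH AY BX BH BY)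
        \<longleftrightarrow> cont_invertible
              (\<lambda>p :: 'x1 \<times> ('y2 \<Rightarrow>\<^sub>L real). (J1 (fst p) + (snd p o\<^sub>L AY), AX (fst p))))
     \<and>
     ((\<exists>BX BH BY. is_pseudoinverse i1 j1 i2 j2 AX AH AY BX BH BY)
        \<longleftrightarrow> cont_invertible
              (\<lambda>p :: 'y1 \<times> ('x2 \<Rightarrow>\<^sub>L real). (K_map J1 (fst p) + (snd p o\<^sub>L AX), AY (fst p))))
     \<and>
     ((\<exists>BX BH BY. is_pseudoinverse i1 j1 i2 j2 AX AH AY BX BH BY) \<longrightarrow>
        para_hilbert_on {u. AX u = 0} {v. AH v = 0} {w. AY w = 0}
          (blinfun_apply i1) (blinfun_apply j1) (\<lambda>u w. J1 u w))"
proof -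
  interpret setting i1 j1 J1 i2 j2 J2 AX AH AY
    by (rule setting.intro) (fact E1 refl1 E2 A surj)+
  show ?thesis using S_iff T_iff P_E0 unfolding Smap_def Tmap_def by blast
qed

end
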